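(* Let $L\ge 2$ and let $f_{i,j}:\mathbb{R}\to\mathbb{R}$, $i,j=0,\ldots,L-1$, be $1$-periodic functions with absolutely convergent Fourier series. Consider the two-dimensional compact $\mathrm{U}(1)$ lattice gauge integral $$\mathcal{I} := \int_{[0,1]^{L^2}}\int_{[0,1]^{L^2}} \prod_{i=0}^{L-1}\prod_{j=0}^{L-1} f_{i,j}\bigl(x^a_{i,j} - x^a_{i,j+1} - x^b_{i,j} + x^b_{i+1,j}\bigr)\,\mathrm{d}\boldsymbol{x}^a\,\mathrm{d}\boldsymbol{x}^b,$$ where $\boldsymbol{x}^a=(x^a_{i,j})_{i,j=0}^{L-1}$, $\boldsymbol{x}^b=(x^b_{i,j})_{i,j=0}^{L-1}$ and all indices are taken modulo $L$. (Equivalently, $\mathcal{I}=\int_{([0,1]^L)^L}\prod_{i=0}^{L-1} g_i(\boldsymbol{y}_{i+1}-\boldsymbol{y}_i)\,\mathrm{d}\boldsymbol{y}_0\cdots\mathrm{d}\boldsymbol{y}_{L-1}$ with $\boldsymbol{y}_L\equiv\boldsymbol{y}_0$ and $g_i(\boldsymbol{y})=\int_{[0,1]^L}\prod_{j=0}^{L-1} f_{i,j}(x_j-x_{j+1}+y_j)\,\mathrm{d}\boldsymbol{x}$, $x_L\equiv x_0$.) Define $\mu_{i+jL}:=f_{i,j}$ for $i,j=0,\ldots,L-1$. Then $$\mathcal{I} = \int_{[0,1]^{L^2}} \prod_{k=0}^{L^2-1} \mu_k\bigl(x_{k+1}-x_k\bigr)\,\mathrm{d}\boldsymbol{x},\qquad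 \boldsymbol{x}=(x_0,\ldots,x_{L^2-1}),$$ where the indices are now taken modulo $L^2$, i.e. $x_{L^2}\equiv x_0$.
   Context: A $1$-periodic function $f$ has absolutely convergent Fourier series if $\sum_{m\in\mathbb{Z}}|\hat f(m)|<\infty$ with $\hat f(m)=\int_0^1 f(x)e^{-2\pi\mathrm{i} m x}\,\mathrm{d}x$. *)

theory Defs
  imports "HOL-Analysis.Analysis"
begin

definition unit_interval_measure :: "real measure" where
  "unit_interval_measure = restrict_space lborel {0..1}"

definition unit_cube :: "'i set \<Rightarrow> ('i \<Rightarrow> real) measure" where
  "unit_cube I = PiM I (\<lambda>_. unit_interval_measure)"

definition fourier_coeff :: "(real \<Rightarrow> real) \<Rightarrow> int \<Rightarrow> complex" where
  "fourier_coeff f m =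
     (LINT x : {0..1} | lborel. complex_of_real (f x) * exp (- (2 * pi * \<i> * of_int m * complex_of_real x)))"

definition abs_conv_fourier :: "(real \<Rightarrow> real) \<Rightarrow> bool" where
  "abs_conv_fourier f \<longleftrightarrow>
     (\<forall>x. f (x + 1) = f x) \<and> f \<in> borel_measurable borel \<and>
     set_integrable lborel {0..1} f \<and>
     (\<lambda>m. norm (fourier_coeff f m)) summable_on (UNIV :: int set)"

end

theory Submission
  imports Defs "HOL-Probability.Probability"
begin
definition ee :: "real \<Rightarrow> complex" where
  "ee t = exp (2 * pi * \<i> * complex_of_real t)"

lemma ee_add: "ee (a + b) = ee a * ee b"
  unfolding ee_def by (simp add: distrib_left exp_add)

lemma ee_diff: "ee (a - b) = ee a / ee b"
  unfolding ee_def by (simp add: right_diff_distrib exp_diff)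

lemma ee_minus: "ee (- a) = inverse (ee a)"
  unfolding ee_def by (simp add: exp_minus)

lemma norm_ee [simp]: "norm (ee t) = 1"
  unfolding ee_def by (simp add: norm_exp_eq_Re)

lemma ee_nonzero [simp]: "ee t \<noteq> 0"
  unfolding ee_def by simp

lemma ee_zero [simp]: "ee 0 = 1"
  unfolding ee_def by simp

lemma ee_int [simp]: "ee (of_int k) = 1"
proof -
  have "2*pi*\<i>*complex_of_real (of_int k) = (2 * of_real (of_int k) * pi) * \<i>" by simp
  then show ?thesis unfolding ee_def using exp_integer_2pi[of "of_int k"] by (simp add: mult_ac)
qed

lemma ee_plus_int: "ee (t + of_int k) = ee t"
  by (simp add: ee_add)

lemma ee_sum: "finite A \<Longrightarrow> ee (\<Sum>x\<in>A. g x) = (\<Prod>x\<in>A. ee (g x))"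
  by (induction A rule: finite_induct) (auto simp: ee_add)

lemma continuous_ee [continuous_intros]: "continuous_on S ee"
  unfolding ee_def by (intro continuous_intros)

lemma isCont_ee: "isCont ee t"
  unfolding ee_def by (intro continuous_intros)

lemma ee_borel [measurable]: "ee \<in> borel_measurable borel"
  by (intro borel_measurable_continuous_onI continuous_ee)

lemma ee_has_deriv:
  "((\<lambda>t. ee (k * t)) has_vector_derivative (2 * pi * \<i> * of_real k * ee (k * t))) (at t within S)"
proof -
  have e: "\<And>t. ee (k * t) = exp (t *\<^sub>R (2 * pi * \<i> * of_real k))"
    unfolding ee_def by (simp add: scaleR_conv_of_real mult_ac)
  show ?thesis unfolding e
    by (rule has_vector_derivative_at_within, rule exp_scaleR_has_vector_derivative_left)
qed

lemma space_uim [simp]: "space unit_interval_measure = {0..1}"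
  unfolding unit_interval_measure_def by (simp add: space_restrict_space)

lemma sets_uim: "sets unit_interval_measure = sets (restrict_space lborel {0..1::real})"
  unfolding unit_interval_measure_def ..

lemma prob_space_uim: "prob_space unit_interval_measure"
proof
  have "emeasure unit_interval_measure {0..1} = emeasure lborel {0..1::real}"
    unfolding unit_interval_measure_def by (subst emeasure_restrict_space) auto
  then show "emeasure unit_interval_measure (space unit_interval_measure) = 1" by simp
qed

interpretation uim: prob_space unit_interval_measure by (rule prob_space_uim)

lemma product_sigma_finite_uim: "product_sigma_finite (\<lambda>_. unit_interval_measure)"
  unfolding product_sigma_finite_def by (auto intro: uim.sigma_finite_measure_axioms)

lemma prob_space_cube: "prob_space (unit_cube I)"
  unfolding unit_cube_def by (intro prob_space_PiM prob_space_uim)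

lemma space_cube: "space (unit_cube I) = (I \<rightarrow>\<^sub>E {0..1})"
  unfolding unit_cube_def by (simp add: space_PiM)

lemma integral_uim:
  fixes f :: "real \<Rightarrow> 'b::{banach, second_countable_topology}"
  shows "integral\<^sup>L unit_interval_measure f = (LINT x:{0..1}|lborel. f x)"
  unfolding unit_interval_measure_def set_lebesgue_integral_def
  by (subst integral_restrict_space) auto

lemma integral_ee_uim:
  "(\<integral>t. ee (of_int k * t) \<partial>unit_interval_measure) = (if k = 0 then 1 else 0)"
proof -
  have si: "set_integrable lborel {0..1::real} (\<lambda>t. ee (of_int k * t))"
    unfolding set_integrable_def
    by (rule borel_integrable_compact) (auto intro!: continuous_intros continuous_on_compose2[OF continuous_ee])
  have "(\<integral>t. ee (of_int k * t) \<partial>unit_interval_measure) = integral {0..1} (\<lambda>t. ee (of_int k * t))"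
    unfolding integral_uim by (rule set_borel_integral_eq_integral(2)[OF si])
  also have "\<dots> = (if k = 0 then 1 else 0)"
  proof (cases "k = 0")
    case True then show ?thesis by simp
  next
    case False
    define c where "c = 2 * pi * \<i> * complex_of_real (of_int k)"
    have c0: "c \<noteq> 0" using False by (simp add: c_def)
    have "((\<lambda>t. ee (of_int k * t)) has_integral (ee (of_int k * 1) / c - ee (of_int k * 0) / c)) {0..1}"
    proof (rule fundamental_theorem_of_calculus[where f = "\<lambda>t. ee (of_int k * t) / c"])
      fix x :: real
      have d: "((\<lambda>t. ee (of_int k * t) * (1/c)) has_vector_derivative (c * ee (of_int k * x)) * (1/c)) (at x within {0..1})"
        unfolding c_def by (rule has_vector_derivative_mult_left[OF ee_has_deriv])
      have e1: "(\<lambda>t. ee (of_int k * t) * (1/c)) = (\<lambda>t. ee (of_int k * t) / c)" by (simp add: field_simps)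
      have e2: "(c * ee (of_int k * x)) * (1/c) = ee (of_int k * x)" using c0 by (simp add: field_simps)
      show "((\<lambda>t. ee (of_int k * t) / c) has_vector_derivative ee (of_int k * x)) (at x within {0..1})"
        using d unfolding e1 e2 .
    qed auto
    then show ?thesis using False by (simp add: integral_unique)
  qed
  finally show ?thesis .
qed

lemma integrable_ee_uim: "integrable unit_interval_measure (\<lambda>t. ee (a * t))"
proof (rule uim.integrable_const_bound[where B=1])
  show "(\<lambda>t. ee (a * t)) \<in> borel_measurable unit_interval_measure"
    unfolding unit_interval_measure_def by (intro measurable_restrict_space1) measurable
qed auto

lemma integral_ee_cube:
  fixes V :: "'i set" and \<kappa> :: "'i \<Rightarrow> int"
  assumes "finite V"
  shows "(\<integral>x. ee (\<theta> + (\<Sum>v\<in>V. of_int (\<kappa> v) * x v)) \<partial>unit_cube V)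
          = (if \<forall>v\<in>V. \<kappa> v = 0 then ee \<theta> else 0)"
proof -
  interpret P: product_sigma_finite "\<lambda>_::'i. unit_interval_measure" by (rule product_sigma_finite_uim)
  have "(\<integral>x. ee (\<theta> + (\<Sum>v\<in>V. of_int (\<kappa> v) * x v)) \<partial>unit_cube V)
      = (\<integral>x. ee \<theta> * (\<Prod>v\<in>V. ee (of_int (\<kappa> v) * x v)) \<partial>unit_cube V)"
    using assms by (simp add: ee_add ee_sum)
  also have "\<dots> = ee \<theta> * (\<integral>x. (\<Prod>v\<in>V. ee (of_int (\<kappa> v) * x v)) \<partial>unit_cube V)"
    by simp
  also have "(\<integral>x. (\<Prod>v\<in>V. ee (of_int (\<kappa> v) * x v)) \<partial>unit_cube V)
      = (\<Prod>v\<in>V. \<integral>t. ee (of_int (\<kappa> v) * t) \<partial>unit_interval_measure)"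
    unfolding unit_cube_def
    by (rule P.product_integral_prod[OF assms, of "\<lambda>v t. ee (of_int (\<kappa> v) * t)"])
       (rule integrable_ee_uim)
  also have "\<dots> = (\<Prod>v\<in>V. if \<kappa> v = 0 then 1 else 0)"
    by (simp add: integral_ee_uim)
  also have "\<dots> = (if \<forall>v\<in>V. \<kappa> v = 0 then 1 else 0)"
  proof (cases "\<forall>v\<in>V. \<kappa> v = 0")
    case True then show ?thesis by simp
  next
    case False
    then obtain v where "v \<in> V" "\<kappa> v \<noteq> 0" by auto
    have "(\<Prod>v\<in>V. if \<kappa> v = 0 then 1 else 0 :: complex) = 0"
      using assms \<open>v \<in> V\<close> \<open>\<kappa> v \<noteq> 0\<close> by (subst prod_zero_iff) auto
    then show ?thesis using False by simp
  qed
  finally show ?thesis by simp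
qed

lemma succ_pred_mod: "0 < (n::nat) \<Longrightarrow> v < n \<Longrightarrow> ((v + n - 1) mod n + 1) mod n = v"
proof -
  assume n: "0 < n" and v: "v < n"
  show ?thesis
  proof (cases v)
    case 0 then show ?thesis using n by simp
  next
    case (Suc w)
    then have "(v + n - 1) mod n = w" using v by (simp add: mod_if)
    then show ?thesis using v Suc by simp
  qed
qed

lemma pred_succ_mod: "0 < (n::nat) \<Longrightarrow> k < n \<Longrightarrow> ((k + 1) mod n + n - 1) mod n = k"
proof -
  assume n: "0 < n" and k: "k < n"
  show ?thesis
  proof (cases "k + 1 = n")
    case True then show ?thesis using n by simp
  next
    case False
    then have "(k + 1) mod n = k + 1" using k by simp
    then show ?thesis using k n by simp
  qed
qed

lemma sum_shift:
  fixes g :: "nat \<Rightarrow> 'b \<Rightarrow> 'a::comm_monoid_add"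
  assumes n: "0 < n"
  shows "(\<Sum>k<n. g k (h ((k + 1) mod n))) = (\<Sum>v<n. g ((v + n - 1) mod n) (h v))"
  by (rule sum.reindex_bij_witness[of _ "\<lambda>v. (v + n - 1) mod n" "\<lambda>k. (k + 1) mod n"])
     (use n succ_pred_mod[OF n] pred_succ_mod[OF n] in auto)

lemma expand_prod:
  fixes A :: "'k set" and b :: "'k \<Rightarrow> int \<Rightarrow> complex" and u :: "'k \<Rightarrow> real"
  assumes "finite A" "finite D"
  shows "(\<Prod>k\<in>A. \<Sum>m\<in>D. b k m * ee (of_int m * u k))
       = (\<Sum>m\<in>PiE A (\<lambda>_. D). (\<Prod>k\<in>A. b k (m k)) * ee (\<Sum>k\<in>A. of_int (m k) * u k))"
  using assms by (simp add: prod_sum_PiE prod.distrib ee_sum)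

lemma sum_PiE_const:
  fixes F :: "('k \<Rightarrow> int) \<Rightarrow> 'a::comm_monoid_add"
  assumes K: "finite K" "K \<noteq> {}" and D: "finite D"
    and cond: "\<And>m. m \<in> PiE K (\<lambda>_. D) \<Longrightarrow> P m \<longleftrightarrow> (\<forall>k\<in>K. \<forall>k'\<in>K. m k = m k')"
  shows "(\<Sum>m\<in>PiE K (\<lambda>_. D). if P m then F m else 0) = (\<Sum>c\<in>D. F (\<lambda>k\<in>K. c))"
proof -
  have "(\<Sum>m\<in>PiE K (\<lambda>_. D). if P m then F m else 0) = (\<Sum>m\<in>{m\<in>PiE K (\<lambda>_. D). P m}. F m)"
    using K D by (simp add: sum.inter_filter finite_PiE)
  also have "{m\<in>PiE K (\<lambda>_. D). P m} = (\<lambda>c. \<lambda>k\<in>K. c) ` D"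
  proof (intro equalityI subsetI)
    fix m assume "m \<in> {m\<in>PiE K (\<lambda>_. D). P m}"
    then have m: "m \<in> PiE K (\<lambda>_. D)" "P m" by auto
    obtain k0 where k0: "k0 \<in> K" using K by auto
    have H: "\<forall>k\<in>K. \<forall>k'\<in>K. m k = m k'" using m cond[OF m(1)] by blast
    have "m = (\<lambda>k\<in>K. m k0)"
    proof
      fix k show "m k = (\<lambda>k\<in>K. m k0) k"
      proof (cases "k \<in> K")
        case True
        then have "m k = m k0" using H k0 by blast
        then show ?thesis using True by simp
      next
        case False then show ?thesis using m(1) by (simp add: PiE_def extensional_def)
      qed
    qed
    moreover have "m k0 \<in> D" using m k0 by auto
    ultimately show "m \<in> (\<lambda>c. \<lambda>k\<in>K. c) ` D" by blast
  next
    fix m assume "m \<in> (\<lambda>c. \<lambda>k\<in>K. c) ` D"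
    then obtain c where c: "c \<in> D" "m = (\<lambda>k\<in>K. c)" by blast
    have "(\<lambda>k\<in>K. c) \<in> PiE K (\<lambda>_. D)" using c by auto
    moreover have "P (\<lambda>k\<in>K. c)" using cond[of "\<lambda>k\<in>K. c"] c by auto
    ultimately show "m \<in> {m\<in>PiE K (\<lambda>_. D). P m}" using c by simp
  qed
  also have "(\<Sum>m\<in>(\<lambda>c. \<lambda>k\<in>K. c) ` D. F m) = (\<Sum>c\<in>D. F (\<lambda>k\<in>K. c))"
  proof (rule sum.reindex[unfolded comp_def])
    obtain k0 where k0: "k0 \<in> K" using K by auto
    show "inj_on (\<lambda>c. \<lambda>k\<in>K. c) D"
      by (rule inj_onI) (use k0 in \<open>auto simp: fun_eq_iff dest: spec[of _ k0]\<close>)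
  qed
  finally show ?thesis .
qed

lemma cyclic_const:
  fixes m :: "nat \<Rightarrow> 'a"
  assumes "\<forall>v<n. m ((v + n - 1) mod n) = m v"
  shows "\<forall>v<n. m v = m 0"
proof (intro allI impI)
  fix v assume "v < n"
  then show "m v = m 0"
  proof (induction v)
    case 0 then show ?case by simp
  next
    case (Suc w)
    have "m ((Suc w + n - 1) mod n) = m (Suc w)" using assms Suc.prems by blast
    moreover have "(Suc w + n - 1) mod n = w" using Suc.prems by simp
    ultimately show ?case using Suc by simp
  qed
qed

lemma uim_id_meas: "(\<lambda>t::real. t) \<in> borel_measurable unit_interval_measure"
  unfolding unit_interval_measure_def by (intro measurable_restrict_space1) simp

lemma cube_comp_meas: "v \<in> V \<Longrightarrow> (\<lambda>x. x v) \<in> borel_measurable (unit_cube V)"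
  unfolding unit_cube_def by (rule measurable_compose[OF measurable_component_singleton[of v V] uim_id_meas])

lemma measurable_lin_cube:
  assumes "finite V"
  shows "(\<lambda>x. \<Sum>v\<in>V. r v * x v) \<in> borel_measurable (unit_cube V)"
  by (intro borel_measurable_sum borel_measurable_times borel_measurable_const
        cube_comp_meas) auto

lemma integrable_ee_lin:
  assumes "finite V"
  shows "integrable (unit_cube V) (\<lambda>x. c * ee (\<theta> + (\<Sum>v\<in>V. r v * x v)))"
proof -
  interpret prob_space "unit_cube V" by (rule prob_space_cube)
  show ?thesis
  proof (rule integrable_const_bound[where B="norm c"])
    show "(\<lambda>x. c * ee (\<theta> + (\<Sum>v\<in>V. r v * x v))) \<in> borel_measurable (unit_cube V)"
    proof (rule borel_measurable_times[OF borel_measurable_const])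
      have "(\<lambda>x. \<theta> + (\<Sum>v\<in>V. r v * x v)) \<in> borel_measurable (unit_cube V)"
        by (rule borel_measurable_add[OF borel_measurable_const measurable_lin_cube[OF assms]])
      then show "(\<lambda>x. ee (\<theta> + (\<Sum>v\<in>V. r v * x v))) \<in> borel_measurable (unit_cube V)"
        by (rule measurable_compose[OF _ ee_borel])
    qed
  qed (auto simp: norm_mult)
qed

lemma trig_rhs:
  fixes b :: "nat \<Rightarrow> int \<Rightarrow> complex"
  assumes n: "0 < n"
  shows "(\<integral>x. (\<Prod>k<n. \<Sum>m\<in>{-N..N}. b k m * ee (of_int m * (x ((k + 1) mod n) - x k))) \<partial>unit_cube {..<n})
       = (\<Sum>c\<in>{-N..N}. \<Prod>k<n. b k c)"
proof -
  let ?P = "PiE {..<n} (\<lambda>_. {-N..N})"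
  have lin: "(\<Sum>k<n. of_int (m k) * (x ((k + 1) mod n) - x k))
        = 0 + (\<Sum>v<n. of_int (m ((v + n - 1) mod n) - m v) * x v)" for m :: "nat \<Rightarrow> int" and x :: "nat \<Rightarrow> real"
  proof -
    have "(\<Sum>k<n. of_int (m k) * (x ((k + 1) mod n) - x k))
        = (\<Sum>k<n. of_int (m k) * x ((k + 1) mod n)) - (\<Sum>k<n. of_int (m k) * x k)"
      by (simp add: right_diff_distrib sum_subtractf)
    also have "(\<Sum>k<n. of_int (m k) * x ((k + 1) mod n)) = (\<Sum>v<n. of_int (m ((v + n - 1) mod n)) * x v)"
      by (rule sum_shift[OF n, where g = "\<lambda>k y. of_int (m k) * y" and h = x])
    finally show ?thesis by (simp add: left_diff_distrib sum_subtractf)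
  qed
  have "(\<integral>x. (\<Prod>k<n. \<Sum>m\<in>{-N..N}. b k m * ee (of_int m * (x ((k + 1) mod n) - x k))) \<partial>unit_cube {..<n})
      = (\<integral>x. (\<Sum>m\<in>?P. (\<Prod>k<n. b k (m k)) * ee (0 + (\<Sum>v<n. of_int (m ((v + n - 1) mod n) - m v) * x v))) \<partial>unit_cube {..<n})"
    by (simp only: expand_prod[OF finite_lessThan finite_atLeastAtMost_int] lin)
  also have "\<dots> = (\<Sum>m\<in>?P. \<integral>x. (\<Prod>k<n. b k (m k)) * ee (0 + (\<Sum>v<n. of_int (m ((v + n - 1) mod n) - m v) * x v)) \<partial>unit_cube {..<n})"
    by (rule Bochner_Integration.integral_sum) (rule integrable_ee_lin, simp)
  also have "\<dots> = (\<Sum>m\<in>?P. if (\<forall>v\<in>{..<n}. m ((v + n - 1) mod n) - m v = 0) then (\<Prod>k<n. b k (m k)) else 0)"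
    by (intro sum.cong refl) (simp only: integral_mult_right_zero integral_ee_cube[OF finite_lessThan] ee_zero, simp)
  also have "\<dots> = (\<Sum>c\<in>{-N..N}. (\<Prod>k<n. b k ((\<lambda>k\<in>{..<n}. c) k)))"
  proof (rule sum_PiE_const)
    fix m assume m: "m \<in> ?P"
    show "(\<forall>v\<in>{..<n}. m ((v + n - 1) mod n) - m v = 0) \<longleftrightarrow> (\<forall>k\<in>{..<n}. \<forall>k'\<in>{..<n}. m k = m k')"
    proof
      assume H1: "\<forall>v\<in>{..<n}. m ((v + n - 1) mod n) - m v = 0"
      have "\<forall>v<n. m ((v + n - 1) mod n) = m v"
      proof (intro allI impI)
        fix v assume "v < n"
        with H1 have "m ((v + n - 1) mod n) - m v = 0" by blast
        then show "m ((v + n - 1) mod n) = m v" by simp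
      qed
      then have A: "\<forall>v<n. m v = m 0" by (rule cyclic_const)
      show "\<forall>k\<in>{..<n}. \<forall>k'\<in>{..<n}. m k = m k'"
      proof (intro ballI)
        fix k k' assume "k \<in> {..<n}" "k' \<in> {..<n}"
        then have "m k = m 0" "m k' = m 0" using A by blast+
        then show "m k = m k'" by (simp only:)
      qed
    next
      assume H: "\<forall>k\<in>{..<n}. \<forall>k'\<in>{..<n}. m k = m k'"
      show "\<forall>v\<in>{..<n}. m ((v + n - 1) mod n) - m v = 0"
      proof
        fix v assume "v \<in> {..<n}"
        moreover have "(v + n - 1) mod n \<in> {..<n}" using n by simp
        ultimately have "m ((v + n - 1) mod n) = m v" using H by blast
        then show "m ((v + n - 1) mod n) - m v = 0" by simp
      qed
    qed
  next
    show "{..<n} \<noteq> {}" using n lessThan_iff by blast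
  qed simp_all
  also have "\<dots> = (\<Sum>c\<in>{-N..N}. \<Prod>k<n. b k c)" by simp
  finally show ?thesis .
qed

lemma sum_shift1:
  fixes g :: "nat \<times> nat \<Rightarrow> 'b::comm_ring" and h :: "nat \<times> nat \<Rightarrow> 'b"
  assumes L: "0 < L"
  shows "(\<Sum>p\<in>{..<L}\<times>{..<L}. g p * h ((fst p + 1) mod L, snd p))
       = (\<Sum>p\<in>{..<L}\<times>{..<L}. g ((fst p + L - 1) mod L, snd p) * h p)"
  by (rule sum.reindex_bij_witness[of _ "\<lambda>p. ((fst p + L - 1) mod L, snd p)" "\<lambda>p. ((fst p + 1) mod L, snd p)"])
     (use L succ_pred_mod[OF L] pred_succ_mod[OF L] in auto)

lemma sum_shift2:
  fixes g :: "nat \<times> nat \<Rightarrow> 'b::comm_ring" and h :: "nat \<times> nat \<Rightarrow> 'b"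
  assumes L: "0 < L"
  shows "(\<Sum>p\<in>{..<L}\<times>{..<L}. g p * h (fst p, (snd p + 1) mod L))
       = (\<Sum>p\<in>{..<L}\<times>{..<L}. g (fst p, (snd p + L - 1) mod L) * h p)"
  by (rule sum.reindex_bij_witness[of _ "\<lambda>p. (fst p, (snd p + L - 1) mod L)" "\<lambda>p. (fst p, (snd p + 1) mod L)"])
     (use L succ_pred_mod[OF L] pred_succ_mod[OF L] in auto)

lemma prod_pairs: "(\<Prod>i<L. \<Prod>j<L. g i j) = (\<Prod>p\<in>{..<L}\<times>{..<L}. g (fst p) (snd p))"
  by (simp add: prod.cartesian_product case_prod_beta)

lemma trig_lhs:
  fixes a :: "nat \<Rightarrow> nat \<Rightarrow> int \<Rightarrow> complex"
  assumes L: "0 < L"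
  shows "(\<integral>xa. (\<integral>xb. (\<Prod>i<L. \<Prod>j<L. \<Sum>m\<in>{-N..N}. a i j m *
            ee (of_int m * (xa (i, j) - xa (i, (j + 1) mod L) - xb (i, j) + xb ((i + 1) mod L, j))))
          \<partial>unit_cube ({..<L} \<times> {..<L})) \<partial>unit_cube ({..<L} \<times> {..<L}))
       = (\<Sum>c\<in>{-N..N}. \<Prod>i<L. \<Prod>j<L. a i j c)"
proof -
  define K where "K = {..<L} \<times> {..<L}"
  have finK: "finite K" unfolding K_def by simp
  let ?P = "PiE K (\<lambda>_. {-N..N})"
  define b where "b p m = a (fst p) (snd p) m" for p m
  define \<theta> where "\<theta> m xa = (\<Sum>p\<in>K. of_int (m p) * (xa p - xa (fst p, (snd p + 1) mod L)))"
    for m :: "nat \<times> nat \<Rightarrow> int" and xa :: "nat \<times> nat \<Rightarrow> real"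
  define \<kappa>b where "\<kappa>b m p = m ((fst p + L - 1) mod L, snd p) - m p" for m :: "nat \<times> nat \<Rightarrow> int" and p
  define \<kappa>a where "\<kappa>a m p = m p - m (fst p, (snd p + L - 1) mod L)" for m :: "nat \<times> nat \<Rightarrow> int" and p
  define C where "C m = (\<Prod>p\<in>K. b p (m p))" for m
  have lin1: "(\<Sum>p\<in>K. of_int (m p) * (xa (fst p, snd p) - xa (fst p, (snd p + 1) mod L) - xb (fst p, snd p) + xb ((fst p + 1) mod L, snd p)))
     = \<theta> m xa + (\<Sum>p\<in>K. of_int (\<kappa>b m p) * xb p)" for m xa xb
  proof -
    have "(\<Sum>p\<in>K. of_int (m p) * (xa (fst p, snd p) - xa (fst p, (snd p + 1) mod L) - xb (fst p, snd p) + xb ((fst p + 1) mod L, snd p)))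
       = \<theta> m xa - (\<Sum>p\<in>K. of_int (m p) * xb p) + (\<Sum>p\<in>K. of_int (m p) * xb ((fst p + 1) mod L, snd p))"
      unfolding \<theta>_def by (simp add: algebra_simps sum.distrib sum_subtractf)
    also have "(\<Sum>p\<in>K. of_int (m p) * xb ((fst p + 1) mod L, snd p))
             = (\<Sum>p\<in>K. of_int (m ((fst p + L - 1) mod L, snd p)) * xb p)"
      unfolding K_def by (rule sum_shift1[OF L, where g = "\<lambda>p. of_int (m p)"])
    finally show ?thesis unfolding \<kappa>b_def by (simp add: algebra_simps sum.distrib sum_subtractf)
  qed
  have lin2: "\<theta> m xa = 0 + (\<Sum>p\<in>K. of_int (\<kappa>a m p) * xa p)" for m xa
  proof -
    have "\<theta> m xa = (\<Sum>p\<in>K. of_int (m p) * xa p) - (\<Sum>p\<in>K. of_int (m p) * xa (fst p, (snd p + 1) mod L))"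
      unfolding \<theta>_def by (simp add: algebra_simps sum_subtractf)
    also have "(\<Sum>p\<in>K. of_int (m p) * xa (fst p, (snd p + 1) mod L))
             = (\<Sum>p\<in>K. of_int (m (fst p, (snd p + L - 1) mod L)) * xa p)"
      unfolding K_def by (rule sum_shift2[OF L, where g = "\<lambda>p. of_int (m p)"])
    finally show ?thesis unfolding \<kappa>a_def by (simp add: algebra_simps sum_subtractf)
  qed
  have integrand: "(\<Prod>i<L. \<Prod>j<L. \<Sum>m\<in>{-N..N}. a i j m *
            ee (of_int m * (xa (i, j) - xa (i, (j + 1) mod L) - xb (i, j) + xb ((i + 1) mod L, j))))
     = (\<Sum>m\<in>?P. C m * ee (\<theta> m xa + (\<Sum>p\<in>K. of_int (\<kappa>b m p) * xb p)))" for xa xb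
  proof -
    have "(\<Prod>i<L. \<Prod>j<L. \<Sum>m\<in>{-N..N}. a i j m *
            ee (of_int m * (xa (i, j) - xa (i, (j + 1) mod L) - xb (i, j) + xb ((i + 1) mod L, j))))
       = (\<Prod>p\<in>K. \<Sum>m\<in>{-N..N}. b p m * ee (of_int m *
            (xa (fst p, snd p) - xa (fst p, (snd p + 1) mod L) - xb (fst p, snd p) + xb ((fst p + 1) mod L, snd p))))"
      unfolding K_def b_def by (rule prod_pairs)
    also have "\<dots> = (\<Sum>m\<in>?P. C m * ee (\<Sum>p\<in>K. of_int (m p) *
            (xa (fst p, snd p) - xa (fst p, (snd p + 1) mod L) - xb (fst p, snd p) + xb ((fst p + 1) mod L, snd p))))"
      unfolding C_def by (rule expand_prod[OF finK finite_atLeastAtMost_int])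
    also have "\<dots> = (\<Sum>m\<in>?P. C m * ee (\<theta> m xa + (\<Sum>p\<in>K. of_int (\<kappa>b m p) * xb p)))"
      by (simp only: lin1)
    finally show ?thesis .
  qed
  have inner: "(\<integral>xb. (\<Prod>i<L. \<Prod>j<L. \<Sum>m\<in>{-N..N}. a i j m *
            ee (of_int m * (xa (i, j) - xa (i, (j + 1) mod L) - xb (i, j) + xb ((i + 1) mod L, j))))
          \<partial>unit_cube K)
     = (\<Sum>m\<in>?P. if (\<forall>p\<in>K. \<kappa>b m p = 0) then C m * ee (0 + (\<Sum>p\<in>K. of_int (\<kappa>a m p) * xa p)) else 0)" for xa
  proof -
    have "(\<integral>xb. (\<Prod>i<L. \<Prod>j<L. \<Sum>m\<in>{-N..N}. a i j m *
            ee (of_int m * (xa (i, j) - xa (i, (j + 1) mod L) - xb (i, j) + xb ((i + 1) mod L, j))))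
          \<partial>unit_cube K)
      = (\<integral>xb. (\<Sum>m\<in>?P. C m * ee (\<theta> m xa + (\<Sum>p\<in>K. of_int (\<kappa>b m p) * xb p))) \<partial>unit_cube K)"
      by (simp only: integrand)
    also have "\<dots> = (\<Sum>m\<in>?P. \<integral>xb. C m * ee (\<theta> m xa + (\<Sum>p\<in>K. of_int (\<kappa>b m p) * xb p)) \<partial>unit_cube K)"
      by (rule Bochner_Integration.integral_sum) (rule integrable_ee_lin[OF finK])
    also have "\<dots> = (\<Sum>m\<in>?P. if (\<forall>p\<in>K. \<kappa>b m p = 0) then C m * ee (\<theta> m xa) else 0)"
      by (intro sum.cong refl) (simp only: integral_mult_right_zero integral_ee_cube[OF finK], simp)
    also have "\<dots> = (\<Sum>m\<in>?P. if (\<forall>p\<in>K. \<kappa>b m p = 0) then C m * ee (0 + (\<Sum>p\<in>K. of_int (\<kappa>a m p) * xa p)) else 0)"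
      by (simp only: lin2)
    finally show ?thesis .
  qed
  have "(\<integral>xa. (\<integral>xb. (\<Prod>i<L. \<Prod>j<L. \<Sum>m\<in>{-N..N}. a i j m *
            ee (of_int m * (xa (i, j) - xa (i, (j + 1) mod L) - xb (i, j) + xb ((i + 1) mod L, j))))
          \<partial>unit_cube K) \<partial>unit_cube K)
     = (\<integral>xa. (\<Sum>m\<in>?P. if (\<forall>p\<in>K. \<kappa>b m p = 0) then C m * ee (0 + (\<Sum>p\<in>K. of_int (\<kappa>a m p) * xa p)) else 0) \<partial>unit_cube K)"
    by (simp only: inner)
  also have "\<dots> = (\<Sum>m\<in>?P. \<integral>xa. (if (\<forall>p\<in>K. \<kappa>b m p = 0) then C m * ee (0 + (\<Sum>p\<in>K. of_int (\<kappa>a m p) * xa p)) else 0) \<partial>unit_cube K)"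
  proof (rule Bochner_Integration.integral_sum)
    fix m
    show "integrable (unit_cube K) (\<lambda>xa. if (\<forall>p\<in>K. \<kappa>b m p = 0) then C m * ee (0 + (\<Sum>p\<in>K. of_int (\<kappa>a m p) * xa p)) else 0)"
    proof (cases "\<forall>p\<in>K. \<kappa>b m p = 0")
      case True
      then show ?thesis using integrable_ee_lin[OF finK, of "C m" 0 "\<lambda>p. of_int (\<kappa>a m p)"] by simp
    next
      case False
      then have "(\<lambda>xa. if (\<forall>p\<in>K. \<kappa>b m p = 0) then C m * ee (0 + (\<Sum>p\<in>K. of_int (\<kappa>a m p) * xa p)) else 0) = (\<lambda>xa. 0)"
        by (intro ext if_not_P)
      then show ?thesis by (simp only: integrable_zero)
    qed
  qed
  also have "\<dots> = (\<Sum>m\<in>?P. if (\<forall>p\<in>K. \<kappa>b m p = 0) \<and> (\<forall>p\<in>K. \<kappa>a m p = 0) then C m else 0)"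
  proof (intro sum.cong refl)
    fix m
    show "(\<integral>xa. (if (\<forall>p\<in>K. \<kappa>b m p = 0) then C m * ee (0 + (\<Sum>p\<in>K. of_int (\<kappa>a m p) * xa p)) else 0) \<partial>unit_cube K)
        = (if (\<forall>p\<in>K. \<kappa>b m p = 0) \<and> (\<forall>p\<in>K. \<kappa>a m p = 0) then C m else 0)"
    proof (cases "\<forall>p\<in>K. \<kappa>b m p = 0")
      case True
      then have "(\<lambda>xa. if (\<forall>p\<in>K. \<kappa>b m p = 0) then C m * ee (0 + (\<Sum>p\<in>K. of_int (\<kappa>a m p) * xa p)) else 0)
         = (\<lambda>xa. C m * ee (0 + (\<Sum>p\<in>K. of_int (\<kappa>a m p) * xa p)))"
        by (intro ext if_P)
      then have eq: "(\<integral>xa. (if (\<forall>p\<in>K. \<kappa>b m p = 0) then C m * ee (0 + (\<Sum>p\<in>K. of_int (\<kappa>a m p) * xa p)) else 0) \<partial>unit_cube K)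
         = C m * (if \<forall>p\<in>K. \<kappa>a m p = 0 then ee 0 else 0)"
        by (simp only: integral_mult_right_zero integral_ee_cube[OF finK])
      show ?thesis by (simp only: eq) (use True in simp)
    next
      case False
      then have "(\<lambda>xa. if (\<forall>p\<in>K. \<kappa>b m p = 0) then C m * ee (0 + (\<Sum>p\<in>K. of_int (\<kappa>a m p) * xa p)) else 0) = (\<lambda>xa. 0)"
        by (intro ext if_not_P)
      then show ?thesis using False by (simp only: integral_zero) simp
    qed
  qed
  also have "\<dots> = (\<Sum>c\<in>{-N..N}. C (\<lambda>p\<in>K. c))"
  proof (rule sum_PiE_const[OF finK _ finite_atLeastAtMost_int])
    show "K \<noteq> {}" unfolding K_def using L by blast
  next
    fix m assume m: "m \<in> ?P"
    show "((\<forall>p\<in>K. \<kappa>b m p = 0) \<and> (\<forall>p\<in>K. \<kappa>a m p = 0)) \<longleftrightarrow> (\<forall>k\<in>K. \<forall>k'\<in>K. m k = m k')"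
    proof
      assume H: "(\<forall>p\<in>K. \<kappa>b m p = 0) \<and> (\<forall>p\<in>K. \<kappa>a m p = 0)"
      have row: "m (i, j) = m (i, 0)" if "i < L" "j < L" for i j
      proof -
        have "\<forall>v<L. (\<lambda>j. m (i, j)) ((v + L - 1) mod L) = (\<lambda>j. m (i, j)) v"
        proof (intro allI impI)
          fix v assume "v < L"
          then have "(i, v) \<in> K" using that unfolding K_def by simp
          then have "\<kappa>a m (i, v) = 0" using H by blast
          then show "(\<lambda>j. m (i, j)) ((v + L - 1) mod L) = (\<lambda>j. m (i, j)) v" unfolding \<kappa>a_def by simp
        qed
        from cyclic_const[OF this] that show ?thesis by blast
      qed
      have col: "m (i, 0) = m (0, 0)" if "i < L" for i
      proof -
        have "\<forall>v<L. (\<lambda>i. m (i, 0)) ((v + L - 1) mod L) = (\<lambda>i. m (i, 0)) v"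
        proof (intro allI impI)
          fix v assume "v < L"
          then have "(v, 0) \<in> K" using L unfolding K_def by simp
          then have "\<kappa>b m (v, 0) = 0" using H by blast
          then show "(\<lambda>i. m (i, 0)) ((v + L - 1) mod L) = (\<lambda>i. m (i, 0)) v" unfolding \<kappa>b_def by simp
        qed
        from cyclic_const[OF this] that show ?thesis by blast
      qed
      have all: "m p = m (0, 0)" if pK: "p \<in> K" for p
      proof -
        obtain i j where p: "p = (i, j)" "i < L" "j < L" using pK unfolding K_def by auto
        have "m (i, j) = m (i, 0)" by (rule row[OF p(2,3)])
        also have "\<dots> = m (0, 0)" by (rule col[OF p(2)])
        finally show ?thesis using p(1) by simp
      qed
      show "\<forall>k\<in>K. \<forall>k'\<in>K. m k = m k'"
      proof (intro ballI)
        fix k k' assume "k \<in> K" "k' \<in> K"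
        then have "m k = m (0, 0)" "m k' = m (0, 0)" using all by blast+
        then show "m k = m k'" by (simp only:)
      qed
    next
      assume H: "\<forall>k\<in>K. \<forall>k'\<in>K. m k = m k'"
      have "\<kappa>b m p = 0 \<and> \<kappa>a m p = 0" if "p \<in> K" for p
      proof -
        have "((fst p + L - 1) mod L, snd p) \<in> K" "(fst p, (snd p + L - 1) mod L) \<in> K"
          using that L unfolding K_def by auto
        then have "m ((fst p + L - 1) mod L, snd p) = m p" "m (fst p, (snd p + L - 1) mod L) = m p"
          using H that by blast+
        then show ?thesis unfolding \<kappa>a_def \<kappa>b_def by simp
      qed
      then show "(\<forall>p\<in>K. \<kappa>b m p = 0) \<and> (\<forall>p\<in>K. \<kappa>a m p = 0)" by blast
    qed
  qed
  also have "\<dots> = (\<Sum>c\<in>{-N..N}. \<Prod>i<L. \<Prod>j<L. a i j c)"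
    unfolding C_def b_def K_def by (simp add: prod_pairs)
  finally show ?thesis unfolding K_def .
qed

definition FS :: "(int \<Rightarrow> complex) \<Rightarrow> real \<Rightarrow> complex" where
  "FS c t = infsum (\<lambda>m. c m * ee (of_int m * t)) UNIV"

definition PS :: "(int \<Rightarrow> complex) \<Rightarrow> nat \<Rightarrow> real \<Rightarrow> complex" where
  "PS c N t = (\<Sum>m\<in>{- int N..int N}. c m * ee (of_int m * t))"

lemma tail_bound:
  fixes c :: "int \<Rightarrow> complex"
  assumes S: "(\<lambda>m. norm (c m)) summable_on UNIV" and F: "finite F"
  shows "norm (FS c t - (\<Sum>m\<in>F. c m * ee (of_int m * t)))
           \<le> infsum (\<lambda>m. norm (c m)) UNIV - (\<Sum>m\<in>F. norm (c m))"
    and "(\<Sum>m\<in>F. norm (c m)) \<le> infsum (\<lambda>m. norm (c m)) UNIV"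
proof -
  define g where "g m = c m * ee (of_int m * t)" for m
  have ng: "norm (g m) = norm (c m)" for m by (simp add: g_def norm_mult)
  have abs: "(\<lambda>m. norm (g m)) summable_on UNIV" using S by (simp add: ng)
  have gs: "g summable_on UNIV" by (rule abs_summable_summable[OF abs])
  have U: "UNIV = F \<union> (UNIV - F)" by auto
  have gsc: "g summable_on (UNIV - F)" by (rule summable_on_subset_banach[OF gs]) auto
  have nsc: "(\<lambda>m. norm (c m)) summable_on (UNIV - F)" by (rule summable_on_subset_banach[OF S]) auto
  have "infsum g UNIV = infsum g F + infsum g (UNIV - F)"
    by (subst U, rule infsum_Un_disjoint) (use F gsc in auto)
  then have e1: "infsum g UNIV - sum g F = infsum g (UNIV - F)" using F by simp
  have "infsum (\<lambda>m. norm (c m)) UNIV = infsum (\<lambda>m. norm (c m)) F + infsum (\<lambda>m. norm (c m)) (UNIV - F)"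
    by (subst U, rule infsum_Un_disjoint) (use F nsc in auto)
  then have e2: "infsum (\<lambda>m. norm (c m)) UNIV - (\<Sum>m\<in>F. norm (c m)) = infsum (\<lambda>m. norm (c m)) (UNIV - F)"
    using F by simp
  have "norm (infsum g (UNIV - F)) \<le> infsum (\<lambda>m. norm (g m)) (UNIV - F)"
    by (rule norm_infsum_bound) (use nsc in \<open>simp add: ng\<close>)
  then show "norm (FS c t - (\<Sum>m\<in>F. c m * ee (of_int m * t)))
           \<le> infsum (\<lambda>m. norm (c m)) UNIV - (\<Sum>m\<in>F. norm (c m))"
    unfolding FS_def g_def[symmetric] e1 e2 by (simp add: ng)
  have "0 \<le> infsum (\<lambda>m. norm (c m)) (UNIV - F)" by (rule infsum_nonneg) simp
  then show "(\<Sum>m\<in>F. norm (c m)) \<le> infsum (\<lambda>m. norm (c m)) UNIV" using e2 by simp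
qed

lemma finite_int_subset_interval: "finite (F::int set) \<Longrightarrow> \<exists>N::nat. F \<subseteq> {- int N..int N}"
proof (induction F rule: finite_induct)
  case empty then show ?case by auto
next
  case (insert x F)
  then obtain N where N: "F \<subseteq> {- int N..int N}" by auto
  have a: "int N \<le> int (max N (nat \<bar>x\<bar>))" "\<bar>x\<bar> \<le> int (max N (nat \<bar>x\<bar>))" by auto
  have "insert x F \<subseteq> {- int (max N (nat \<bar>x\<bar>))..int (max N (nat \<bar>x\<bar>))}"
  proof
    fix y assume "y \<in> insert x F"
    then have "\<bar>y\<bar> \<le> int (max N (nat \<bar>x\<bar>))"
    proof
      assume "y \<in> F" then have "y \<in> {- int N..int N}" using N by blast
      then have "\<bar>y\<bar> \<le> int N" by (simp add: abs_le_iff)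
      then show ?thesis using a by linarith
    qed (use a in simp)
    then show "y \<in> {- int (max N (nat \<bar>x\<bar>))..int (max N (nat \<bar>x\<bar>))}" by auto
  qed
  then show ?case by blast
qed

lemma FS_unif:
  fixes c :: "int \<Rightarrow> complex"
  assumes S: "(\<lambda>m. norm (c m)) summable_on UNIV"
  shows "\<forall>\<epsilon>>0. \<exists>N0. \<forall>N\<ge>N0. \<forall>t. norm (PS c N t - FS c t) \<le> \<epsilon>"
proof (intro allI impI)
  fix \<epsilon> :: real assume e: "\<epsilon> > 0"
  obtain F where F: "finite F" "dist (sum (\<lambda>m. norm (c m)) F) (infsum (\<lambda>m. norm (c m)) UNIV) \<le> \<epsilon>"
    using infsum_finite_approximation[OF S e] by auto
  obtain N0 :: nat where N0: "F \<subseteq> {- int N0..int N0}"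
    using finite_int_subset_interval[OF F(1)] by auto
  have le: "(\<Sum>m\<in>F. norm (c m)) \<le> infsum (\<lambda>m. norm (c m)) UNIV" by (rule tail_bound(2)[OF S F(1)])
  show "\<exists>N0. \<forall>N\<ge>N0. \<forall>t. norm (PS c N t - FS c t) \<le> \<epsilon>"
  proof (intro exI allI impI)
    fix N t assume N: "N0 \<le> N"
    have FN: "F \<subseteq> {- int N..int N}" using N0 N by auto
    have "(\<Sum>m\<in>F. norm (c m)) \<le> (\<Sum>m\<in>{- int N..int N}. norm (c m))"
      by (rule sum_mono2[OF _ FN]) auto
    moreover have "norm (FS c t - PS c N t) \<le> infsum (\<lambda>m. norm (c m)) UNIV - (\<Sum>m\<in>{- int N..int N}. norm (c m))"
      unfolding PS_def by (rule tail_bound(1)[OF S]) simp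
    moreover have "infsum (\<lambda>m. norm (c m)) UNIV - (\<Sum>m\<in>F. norm (c m)) \<le> \<epsilon>"
      using F(2) le by (simp add: dist_real_def)
    ultimately show "norm (PS c N t - FS c t) \<le> \<epsilon>" by (simp add: norm_minus_commute)
  qed
qed

lemma PS_bound:
  assumes S: "(\<lambda>m. norm (c m)) summable_on UNIV"
  shows "norm (PS c N t) \<le> infsum (\<lambda>m. norm (c m)) UNIV"
proof -
  have "norm (PS c N t) \<le> (\<Sum>m\<in>{- int N..int N}. norm (c m * ee (of_int m * t)))"
    unfolding PS_def by (rule norm_sum)
  also have "\<dots> = (\<Sum>m\<in>{- int N..int N}. norm (c m))" by (simp add: norm_mult)
  also have "\<dots> \<le> infsum (\<lambda>m. norm (c m)) UNIV" by (rule tail_bound(2)[OF S]) simp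
  finally show ?thesis .
qed

lemma FS_bound:
  assumes S: "(\<lambda>m. norm (c m)) summable_on UNIV"
  shows "norm (FS c t) \<le> infsum (\<lambda>m. norm (c m)) UNIV"
  using tail_bound(1)[OF S, of "{}" t] by simp

lemma PS_lim:
  assumes S: "(\<lambda>m. norm (c m)) summable_on UNIV"
  shows "(\<lambda>N. PS c N t) \<longlonglongrightarrow> FS c t"
proof (rule LIMSEQ_I)
  fix r :: real assume r: "0 < r"
  obtain N0 where N0: "\<forall>N\<ge>N0. \<forall>t. norm (PS c N t - FS c t) \<le> r / 2"
    using FS_unif[OF S] r by (meson half_gt_zero)
  show "\<exists>no. \<forall>n\<ge>no. norm (PS c n t - FS c t) < r"
  proof (intro exI allI impI)
    fix n assume "N0 \<le> n"
    then have "norm (PS c n t - FS c t) \<le> r / 2" using N0 by blast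
    then show "norm (PS c n t - FS c t) < r" using r by linarith
  qed
qed

lemma PS_borel [measurable]: "PS c N \<in> borel_measurable borel"
  unfolding PS_def by measurable

lemma FS_borel:
  assumes S: "(\<lambda>m. norm (c m)) summable_on UNIV"
  shows "FS c \<in> borel_measurable borel"
  by (rule borel_measurable_LIMSEQ_metric[where f = "PS c"]) (auto intro: PS_lim[OF S])

lemma FS_periodic: "FS c (t + of_int k) = FS c t"
  unfolding FS_def by (simp add: distrib_left ee_add flip: of_int_mult)

lemma unif_lim_integral:
  fixes P :: "nat \<Rightarrow> 'a \<Rightarrow> complex"
  assumes M: "prob_space M"
    and PM: "\<And>N. P N \<in> borel_measurable M" and QM: "Q \<in> borel_measurable M"
    and QB: "\<And>x. x \<in> space M \<Longrightarrow> norm (Q x) \<le> B"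
    and U: "\<forall>\<epsilon>>0. \<exists>N0. \<forall>N\<ge>N0. \<forall>x\<in>space M. norm (P N x - Q x) \<le> \<epsilon>"
  shows "(\<lambda>N. integral\<^sup>L M (P N)) \<longlonglongrightarrow> integral\<^sup>L M Q"
proof (rule LIMSEQ_I)
  interpret prob_space M by (rule M)
  fix r :: real assume r: "0 < r"
  obtain N0 where N0: "\<forall>N\<ge>N0. \<forall>x\<in>space M. norm (P N x - Q x) \<le> r / 2"
    using U r by (meson half_gt_zero)
  have Qi: "integrable M Q" by (rule integrable_const_bound[where B=B]) (use QB QM in auto)
  show "\<exists>no. \<forall>n\<ge>no. norm (integral\<^sup>L M (P n) - integral\<^sup>L M Q) < r"
  proof (intro exI allI impI)
    fix n assume n: "N0 \<le> n"
    have Di: "integrable M (\<lambda>x. P n x - Q x)"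
      by (rule integrable_const_bound[where B="r/2"]) (use N0 n PM QM in auto)
    have Pi: "integrable M (P n)"
    proof -
      have "integrable M (\<lambda>x. (P n x - Q x) + Q x)" by (rule Bochner_Integration.integrable_add[OF Di Qi])
      then show ?thesis by simp
    qed
    have "norm (integral\<^sup>L M (P n) - integral\<^sup>L M Q) = norm (\<integral>x. P n x - Q x \<partial>M)"
      by (simp add: Bochner_Integration.integral_diff[OF Pi Qi])
    also have "\<dots> \<le> \<integral>x. norm (P n x - Q x) \<partial>M" by (rule integral_norm_bound)
    also have "\<dots> \<le> \<integral>x. r / 2 \<partial>M"
      by (rule integral_mono_AE) (use Di N0 n in \<open>auto intro!: AE_I2\<close>)
    also have "\<dots> = r / 2" by (simp add: prob_space)
    finally show "norm (integral\<^sup>L M (P n) - integral\<^sup>L M Q) < r" using r by simp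
  qed
qed

lemma borel_uim: "f \<in> borel_measurable borel \<Longrightarrow> f \<in> borel_measurable unit_interval_measure"
  unfolding unit_interval_measure_def by (intro measurable_restrict_space1) simp

lemma continuous_on_ee_comp [continuous_intros]: "continuous_on S g \<Longrightarrow> continuous_on S (\<lambda>t. ee (g t))"
  unfolding ee_def by (intro continuous_intros)

lemma int_mult_bounded:
  fixes f g :: "'a \<Rightarrow> complex"
  assumes f: "integrable M f" and g: "g \<in> borel_measurable M" and B: "\<And>x. x \<in> space M \<Longrightarrow> norm (g x) \<le> B"
  shows "integrable M (\<lambda>x. f x * g x)"
proof (rule Bochner_Integration.integrable_bound[where f = "\<lambda>x. of_real \<bar>B\<bar> * f x"])
  show "integrable M (\<lambda>x. of_real \<bar>B\<bar> * f x)" using f by simp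
  show "(\<lambda>x. f x * g x) \<in> borel_measurable M" using f g by (intro borel_measurable_times) auto
  show "AE x in M. norm (f x * g x) \<le> norm (of_real \<bar>B\<bar> * f x)"
  proof (rule AE_I2)
    fix x assume "x \<in> space M"
    then have "norm (g x) \<le> \<bar>B\<bar>" using B[of x] by linarith
    then show "norm (f x * g x) \<le> norm (of_real \<bar>B\<bar> * f x)"
      by (simp add: norm_mult mult.commute[of "\<bar>B\<bar>"] mult_left_mono)
  qed
qed

lemma int_cont:
  fixes h \<phi> :: "real \<Rightarrow> complex"
  assumes h: "integrable unit_interval_measure h" and \<phi>: "continuous_on UNIV \<phi>"
  shows "integrable unit_interval_measure (\<lambda>t. h t * \<phi> t)"
proof -
  have "compact (\<phi> ` {0..1})"
    by (rule compact_continuous_image) (use \<phi> continuous_on_subset in auto)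
  then obtain B where B: "\<And>t. t \<in> {0..1} \<Longrightarrow> norm (\<phi> t) \<le> B"
    by (meson compact_imp_bounded bounded_iff image_eqI)
  show ?thesis
    by (rule int_mult_bounded[OF h borel_uim[OF borel_measurable_continuous_onI[OF \<phi>]]]) (use B in auto)
qed

lemma integrable_uim_of_real:
  assumes "set_integrable lborel {0..1} (f :: real \<Rightarrow> real)"
  shows "integrable unit_interval_measure (\<lambda>t. complex_of_real (f t))"
proof -
  have "integrable unit_interval_measure f"
    unfolding unit_interval_measure_def using assms unfolding set_integrable_def
    by (subst integrable_restrict_space) auto
  then show ?thesis by (rule integrable_bounded_linear[OF bounded_linear_of_real])
qed

lemma fourier_coeff_uim:
  "fourier_coeff f m = (\<integral>t. complex_of_real (f t) * ee (of_int (- m) * t) \<partial>unit_interval_measure)"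
  unfolding fourier_coeff_def integral_uim ee_def by (simp add: mult_ac)

lemma FS_coeff:
  assumes S: "(\<lambda>m. norm (c m)) summable_on UNIV"
  shows "(\<integral>t. FS c t * ee (of_int k * t) \<partial>unit_interval_measure) = c (- k)"
proof -
  define P where "P N t = PS c N t * ee (of_int k * t)" for N t
  have PN: "integral\<^sup>L unit_interval_measure (P N) = (if - k \<in> {- int N..int N} then c (- k) else 0)" for N
  proof -
    have "integral\<^sup>L unit_interval_measure (P N)
        = (\<integral>t. (\<Sum>m\<in>{- int N..int N}. c m * ee (of_int (m + k) * t)) \<partial>unit_interval_measure)"
      unfolding P_def PS_def by (simp add: sum_distrib_right mult.assoc distrib_right ee_add flip: ee_add)
    also have "\<dots> = (\<Sum>m\<in>{- int N..int N}. \<integral>t. c m * ee (of_int (m + k) * t) \<partial>unit_interval_measure)"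
      by (rule Bochner_Integration.integral_sum) (simp add: integrable_ee_uim)
    also have "\<dots> = (\<Sum>m\<in>{- int N..int N}. if m = - k then c m else 0)"
      by (intro sum.cong refl) (simp only: integral_mult_right_zero integral_ee_uim, simp)
    also have "\<dots> = (if - k \<in> {- int N..int N} then c (- k) else 0)"
      by (simp add: sum.delta)
    finally show ?thesis .
  qed
  have lim1: "(\<lambda>N. integral\<^sup>L unit_interval_measure (P N)) \<longlonglongrightarrow> c (- k)"
  proof (rule tendsto_eventually)
    show "\<forall>\<^sub>F N in sequentially. integral\<^sup>L unit_interval_measure (P N) = c (- k)"
    proof (rule eventually_sequentiallyI[of "nat \<bar>k\<bar>"])
      fix N assume "nat \<bar>k\<bar> \<le> N"
      then have "- k \<in> {- int N..int N}" by auto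
      then show "integral\<^sup>L unit_interval_measure (P N) = c (- k)" by (simp add: PN)
    qed
  qed
  have lim2: "(\<lambda>N. integral\<^sup>L unit_interval_measure (P N)) \<longlonglongrightarrow> (\<integral>t. FS c t * ee (of_int k * t) \<partial>unit_interval_measure)"
  proof (rule unif_lim_integral[OF prob_space_uim])
    show "P N \<in> borel_measurable unit_interval_measure" for N
      unfolding P_def by (rule borel_uim) measurable
    show "(\<lambda>t. FS c t * ee (of_int k * t)) \<in> borel_measurable unit_interval_measure"
      by (rule borel_uim) (use FS_borel[OF S] in measurable)
    show "norm (FS c t * ee (of_int k * t)) \<le> infsum (\<lambda>m. norm (c m)) UNIV" for t
      using FS_bound[OF S] by (simp add: norm_mult)
    show "\<forall>\<epsilon>>0. \<exists>N0. \<forall>N\<ge>N0. \<forall>x\<in>space unit_interval_measure. norm (P N x - FS c x * ee (of_int k * x)) \<le> \<epsilon>"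
    proof (intro allI impI)
      fix \<epsilon> :: real assume "\<epsilon> > 0"
      then obtain N0 where N0: "\<forall>N\<ge>N0. \<forall>t. norm (PS c N t - FS c t) \<le> \<epsilon>" using FS_unif[OF S] by blast
      show "\<exists>N0. \<forall>N\<ge>N0. \<forall>x\<in>space unit_interval_measure. norm (P N x - FS c x * ee (of_int k * x)) \<le> \<epsilon>"
      proof (intro exI allI impI ballI)
        fix N x assume "N0 \<le> N"
        then have "norm (PS c N x - FS c x) \<le> \<epsilon>" using N0 by blast
        moreover have "P N x - FS c x * ee (of_int k * x) = (PS c N x - FS c x) * ee (of_int k * x)"
          unfolding P_def by (simp add: algebra_simps)
        ultimately show "norm (P N x - FS c x * ee (of_int k * x)) \<le> \<epsilon>" by (simp add: norm_mult)
      qed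
    qed
  qed
  show ?thesis using LIMSEQ_unique[OF lim2 lim1] .
qed

fun tp :: "(int \<times> complex) list \<Rightarrow> real \<Rightarrow> complex" where
  "tp [] t = 0"
| "tp (p # xs) t = snd p * ee (of_int (fst p) * t) + tp xs t"

lemma tp_cont: "continuous_on UNIV (tp xs)"
  by (induction xs) (auto intro!: continuous_intros)

lemma tp_append: "tp (xs @ ys) t = tp xs t + tp ys t"
  by (induction xs) auto

lemma tp_map: "tp (map (\<lambda>q. (k + fst q, a * snd q)) ys) t = a * ee (of_int k * t) * tp ys t"
  by (induction ys) (auto simp: algebra_simps ee_add)

lemma tp_mult: "tp (concat (map (\<lambda>p. map (\<lambda>q. (fst p + fst q, snd p * snd q)) ys) xs)) t = tp xs t * tp ys t"
  by (induction xs) (auto simp: tp_append tp_map algebra_simps)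

lemma tp_integral:
  fixes h :: "real \<Rightarrow> complex"
  assumes h: "integrable unit_interval_measure h"
    and hz: "\<And>k::int. (\<integral>t. h t * ee (of_int k * t) \<partial>unit_interval_measure) = 0"
  shows "(\<integral>t. h t * tp xs t \<partial>unit_interval_measure) = 0"
proof (induction xs)
  case Nil then show ?case by simp
next
  case (Cons p xs)
  have i1: "integrable unit_interval_measure (\<lambda>t. h t * ee (of_int (fst p) * t))"
    by (rule int_cont[OF h]) (auto intro!: continuous_intros)
  have i2: "integrable unit_interval_measure (\<lambda>t. h t * tp xs t)"
    by (rule int_cont[OF h tp_cont])
  have "(\<integral>t. h t * tp (p # xs) t \<partial>unit_interval_measure)
      = (\<integral>t. snd p * (h t * ee (of_int (fst p) * t)) + h t * tp xs t \<partial>unit_interval_measure)"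
    by (simp add: algebra_simps)
  also have "\<dots> = snd p * (\<integral>t. h t * ee (of_int (fst p) * t) \<partial>unit_interval_measure) + (\<integral>t. h t * tp xs t \<partial>unit_interval_measure)"
    using i1 i2 by simp
  also have "\<dots> = 0" using hz Cons by simp
  finally show ?case .
qed

lemma cnj_ee: "cnj (ee t) = ee (- t)"
  unfolding ee_def by (simp add: exp_cnj)

lemma poly_tp:
  assumes "real_polynomial_function g"
  shows "\<exists>xs. \<forall>t. complex_of_real (g (ee t)) = tp xs t"
  using assms
proof (induction g rule: real_polynomial_function.induct)
  case (linear g)
  interpret bounded_linear g by fact
  have gz: "g z = Re z * g 1 + Im z * g \<i>" for z
  proof -
    have "z = Re z *\<^sub>R 1 + Im z *\<^sub>R \<i>" by (simp add: complex_eq_iff)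
    then have "g z = g (Re z *\<^sub>R 1 + Im z *\<^sub>R \<i>)" by simp
    also have "\<dots> = Re z * g 1 + Im z * g \<i>" by (simp add: add scale)
    finally show ?thesis .
  qed
  define A where "A = complex_of_real (g 1)"
  define B where "B = complex_of_real (g \<i>)"
  let ?xs = "[(1, A / 2 + B / (2 * \<i>)), (-1, A / 2 - B / (2 * \<i>))]"
  have "complex_of_real (g (ee t)) = tp ?xs t" for t
  proof -
    have re: "complex_of_real (Re (ee t)) = (ee t + ee (- t)) / 2"
      using complex_add_cnj[of "ee t"] by (simp add: cnj_ee)
    have d: "ee t - ee (- t) = 2 * complex_of_real (Im (ee t)) * \<i>"
      using complex_diff_cnj[of "ee t"] by (simp add: cnj_ee)
    have im: "complex_of_real (Im (ee t)) = (ee t - ee (- t)) / (2 * \<i>)"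
      by (simp only: d) (simp add: mult.commute[of _ \<i>] mult.left_commute[of _ \<i>])
    have "complex_of_real (g (ee t)) = complex_of_real (Re (ee t)) * A + complex_of_real (Im (ee t)) * B"
      using gz[of "ee t"] unfolding A_def B_def by simp
    also have "\<dots> = (ee t + ee (- t)) / 2 * A + (ee t - ee (- t)) / (2 * \<i>) * B"
      unfolding re im ..
    also have "\<dots> = tp ?xs t" by (simp add: field_simps)
    finally show ?thesis .
  qed
  then show ?case by blast
next
  case (const c)
  have "complex_of_real c = tp [(0, complex_of_real c)] t" for t by simp
  then show ?case by blast
next
  case (add f g)
  then obtain xs ys where "\<forall>t. complex_of_real (f (ee t)) = tp xs t" "\<forall>t. complex_of_real (g (ee t)) = tp ys t"
    by blast
  then have "complex_of_real (f (ee t) + g (ee t)) = tp (xs @ ys) t" for t by (simp add: tp_append)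
  then show ?case by blast
next
  case (mult f g)
  then obtain xs ys where "\<forall>t. complex_of_real (f (ee t)) = tp xs t" "\<forall>t. complex_of_real (g (ee t)) = tp ys t"
    by blast
  then have "complex_of_real (f (ee t) * g (ee t)) = tp (concat (map (\<lambda>p. map (\<lambda>q. (fst p + fst q, snd p * snd q)) ys) xs)) t" for t
    by (simp add: tp_mult)
  then show ?case by blast
qed

lemma ee_sphere: "ee t \<in> sphere 0 1"
  by simp

lemma cont_sphere_integral:
  fixes h :: "real \<Rightarrow> complex" and \<psi> :: "complex \<Rightarrow> real"
  assumes h: "integrable unit_interval_measure h"
    and hz: "\<And>k::int. (\<integral>t. h t * ee (of_int k * t) \<partial>unit_interval_measure) = 0"
    and \<psi>: "continuous_on (sphere 0 1) \<psi>"
  shows "(\<integral>t. h t * complex_of_real (\<psi> (ee t)) \<partial>unit_interval_measure) = 0"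
proof -
  define I where "I = (\<integral>t. h t * complex_of_real (\<psi> (ee t)) \<partial>unit_interval_measure)"
  define A where "A = (\<integral>t. norm (h t) \<partial>unit_interval_measure)"
  have A0: "0 \<le> A" unfolding A_def by simp
  have \<psi>c: "continuous_on UNIV (\<lambda>t. complex_of_real (\<psi> (ee t)))"
    by (intro continuous_intros continuous_on_compose2[OF \<psi>]) (auto intro!: continuous_intros)
  have bound: "norm I \<le> \<epsilon> * A" if e: "\<epsilon> > 0" for \<epsilon>
  proof -
    obtain g where g: "real_polynomial_function g" "\<And>z. z \<in> sphere 0 1 \<Longrightarrow> \<bar>\<psi> z - g z\<bar> < \<epsilon>"
      using Stone_Weierstrass_real_polynomial_function[OF compact_sphere \<psi> e] by blast
    obtain xs where xs: "\<And>t. complex_of_real (g (ee t)) = tp xs t" using poly_tp[OF g(1)] by blast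
    have gc: "continuous_on UNIV g"
      using continuous_real_polymonial_function[OF g(1)] by (simp add: continuous_at_imp_continuous_on)
    define D where "D t = complex_of_real (\<psi> (ee t)) - tp xs t" for t
    have Dc: "continuous_on UNIV D" unfolding D_def by (intro continuous_intros \<psi>c tp_cont)
    have Db: "norm (D t) \<le> \<epsilon>" for t
    proof -
      have "D t = complex_of_real (\<psi> (ee t) - g (ee t))" unfolding D_def xs[symmetric] by simp
      then have "norm (D t) = \<bar>\<psi> (ee t) - g (ee t)\<bar>" by (simp only: norm_of_real)
      then show ?thesis using g(2)[OF ee_sphere[of t]] by simp
    qed
    have iD: "integrable unit_interval_measure (\<lambda>t. h t * D t)" by (rule int_cont[OF h Dc])
    have itp: "integrable unit_interval_measure (\<lambda>t. h t * tp xs t)" by (rule int_cont[OF h tp_cont])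
    have "I = (\<integral>t. h t * D t + h t * tp xs t \<partial>unit_interval_measure)"
      unfolding I_def D_def by (simp add: algebra_simps)
    also have "\<dots> = (\<integral>t. h t * D t \<partial>unit_interval_measure) + (\<integral>t. h t * tp xs t \<partial>unit_interval_measure)"
      by (rule Bochner_Integration.integral_add[OF iD itp])
    also have "(\<integral>t. h t * tp xs t \<partial>unit_interval_measure) = 0" by (rule tp_integral[OF h hz])
    finally have "I = (\<integral>t. h t * D t \<partial>unit_interval_measure)" by simp
    then have "norm I \<le> (\<integral>t. norm (h t * D t) \<partial>unit_interval_measure)"
      by (simp add: integral_norm_bound)
    also have "\<dots> \<le> (\<integral>t. \<epsilon> * norm (h t) \<partial>unit_interval_measure)"
    proof (rule integral_mono)
      show "integrable unit_interval_measure (\<lambda>t. norm (h t * D t))" using iD by simp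
      show "integrable unit_interval_measure (\<lambda>t. \<epsilon> * norm (h t))" using h by simp
      show "norm (h t * D t) \<le> \<epsilon> * norm (h t)" for t
        using Db[of t] by (simp add: norm_mult mult.commute[of \<epsilon>] mult_left_mono)
    qed
    also have "\<dots> = \<epsilon> * A" unfolding A_def by simp
    finally show ?thesis .
  qed
  have "norm I = 0"
  proof (rule ccontr)
    assume "norm I \<noteq> 0"
    then have pos: "norm I > 0" by simp
    define \<epsilon> where "\<epsilon> = norm I / (A + 1)"
    have e: "\<epsilon> > 0" unfolding \<epsilon>_def using pos A0 by simp
    have "norm I \<le> \<epsilon> * A" by (rule bound[OF e])
    also have "\<epsilon> * A < norm I"
      unfolding \<epsilon>_def using pos A0 by (simp add: field_simps)
    finally show False by simp
  qed
  then show ?thesis unfolding I_def by simp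
qed

lemma ee_eq_1_int: "ee x = 1 \<Longrightarrow> \<exists>n::int. x = of_int n"
proof -
  assume "ee x = 1"
  then have "exp (2 * pi * \<i> * complex_of_real x) = 1" unfolding ee_def .
  then obtain n :: int where "Im (2 * pi * \<i> * complex_of_real x) = of_int (2 * n) * pi"
    unfolding exp_eq_1 by blast
  then have "2 * pi * x = 2 * of_int n * pi" by simp
  then have "x = of_int n" by simp
  then show ?thesis by blast
qed

lemma ee_inj_interval:
  assumes t: "t \<in> {0..1}" and s: "s \<in> {a..b}" and a: "0 < a" and b: "b < 1" and e: "ee t = ee s"
  shows "t = s"
proof -
  have "ee (t - s) = 1" using e by (simp add: ee_diff)
  then obtain n :: int where n: "t - s = of_int n" using ee_eq_1_int by blast
  have "- 1 < t - s" "t - s < 1" using t s a b by auto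
  then have "- 1 < n" "n < 1" using n by linarith+
  then have "n = 0" by simp
  then show ?thesis using n by simp
qed

lemma interval_zero:
  fixes h :: "real \<Rightarrow> complex"
  assumes h: "integrable unit_interval_measure h"
    and hz: "\<And>k::int. (\<integral>t. h t * ee (of_int k * t) \<partial>unit_interval_measure) = 0"
    and a: "0 < a" and ab: "a \<le> b" and b: "b < 1"
  shows "(\<integral>t. indicator {a..b} t *\<^sub>R h t \<partial>unit_interval_measure) = 0"
proof -
  define A where "A = ee ` {a..b}"
  have cA: "compact A" unfolding A_def by (intro compact_continuous_image continuous_ee compact_Icc)
  have clA: "closed A" using cA by (rule compact_imp_closed)
  have neA: "A \<noteq> {}" unfolding A_def using ab by auto
  define \<psi> where "\<psi> n z = max 0 (1 - real n * infdist z A)" for n :: nat and z :: complex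
  have \<psi>c: "continuous_on UNIV (\<psi> n)" for n
    unfolding \<psi>_def by (intro continuous_intros)
  have \<psi>b: "0 \<le> \<psi> n z" "\<psi> n z \<le> 1" for n z
    unfolding \<psi>_def using infdist_nonneg[of z A] by (auto simp: max_def mult_nonneg_nonneg)
  have zero: "(\<integral>t. h t * complex_of_real (\<psi> n (ee t)) \<partial>unit_interval_measure) = 0" for n
    by (rule cont_sphere_integral[OF h hz]) (rule continuous_on_subset[OF \<psi>c], simp)
  have hm: "h \<in> borel_measurable unit_interval_measure" using h by auto
  have lim: "(\<lambda>n. \<integral>t. h t * complex_of_real (\<psi> n (ee t)) \<partial>unit_interval_measure)
      \<longlonglongrightarrow> (\<integral>t. indicator {a..b} t *\<^sub>R h t \<partial>unit_interval_measure)"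
  proof (rule integral_dominated_convergence[where w = "\<lambda>t. norm (h t)"])
    show "(\<lambda>t. indicator {a..b} t *\<^sub>R h t) \<in> borel_measurable unit_interval_measure"
      by (intro borel_measurable_scaleR hm borel_uim) simp
    show "(\<lambda>t. h t * complex_of_real (\<psi> n (ee t))) \<in> borel_measurable unit_interval_measure" for n
      by (intro borel_measurable_times hm borel_uim borel_measurable_continuous_onI continuous_intros
          continuous_on_compose2[OF \<psi>c]) auto
    show "integrable unit_interval_measure (\<lambda>t. norm (h t))" using h by simp
    show "AE t in unit_interval_measure. norm (h t * complex_of_real (\<psi> n (ee t))) \<le> norm (h t)" for n
    proof (rule AE_I2)
      fix t
      have "norm (h t * complex_of_real (\<psi> n (ee t))) = norm (h t) * \<psi> n (ee t)"
        using \<psi>b(1)[of n "ee t"] by (simp add: norm_mult)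
      also have "\<dots> \<le> norm (h t) * 1" using \<psi>b(2)[of n "ee t"] by (intro mult_left_mono) auto
      finally show "norm (h t * complex_of_real (\<psi> n (ee t))) \<le> norm (h t)" by simp
    qed
    show "AE t in unit_interval_measure. (\<lambda>n. h t * complex_of_real (\<psi> n (ee t))) \<longlonglongrightarrow> indicator {a..b} t *\<^sub>R h t"
    proof (rule AE_I2)
      fix t assume "t \<in> space unit_interval_measure"
      then have t: "t \<in> {0..1}" by simp
      show "(\<lambda>n. h t * complex_of_real (\<psi> n (ee t))) \<longlonglongrightarrow> indicator {a..b} t *\<^sub>R h t"
      proof (cases "t \<in> {a..b}")
        case True
        then have "ee t \<in> A" unfolding A_def by auto
        then have "\<psi> n (ee t) = 1" for n unfolding \<psi>_def by simp
        then show ?thesis using True by simp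
      next
        case False
        have "ee t \<notin> A"
        proof
          assume "ee t \<in> A"
          then obtain s where s: "s \<in> {a..b}" "ee t = ee s" unfolding A_def by auto
          then have "t = s" using ee_inj_interval[OF t s(1) a b s(2)] by simp
          then show False using False s by simp
        qed
        then have d: "infdist (ee t) A > 0" by (rule infdist_pos_not_in_closed[OF clA neA])
        obtain n0 :: nat where n0: "1 / infdist (ee t) A < real n0" using reals_Archimedean2 by blast
        have "\<forall>\<^sub>F n in sequentially. h t * complex_of_real (\<psi> n (ee t)) = indicator {a..b} t *\<^sub>R h t"
        proof (rule eventually_sequentiallyI[of n0])
          fix n assume "n0 \<le> n"
          then have "1 / infdist (ee t) A < real n" using n0 by linarith
          then have "1 < real n * infdist (ee t) A" using d by (simp add: field_simps)
          then have "\<psi> n (ee t) = 0" unfolding \<psi>_def by simp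
          then show "h t * complex_of_real (\<psi> n (ee t)) = indicator {a..b} t *\<^sub>R h t" using False by simp
        qed
        then show ?thesis by (rule tendsto_eventually)
      qed
    qed
  qed
  have "(\<lambda>n. \<integral>t. h t * complex_of_real (\<psi> n (ee t)) \<partial>unit_interval_measure) \<longlonglongrightarrow> 0"
    by (simp add: zero)
  from LIMSEQ_unique[OF lim this] show ?thesis .
qed

lemma fourier_unique:
  fixes h :: "real \<Rightarrow> complex"
  assumes h: "integrable unit_interval_measure h"
    and hz: "\<And>k::int. (\<integral>t. h t * ee (of_int k * t) \<partial>unit_interval_measure) = 0"
  shows "AE t in unit_interval_measure. h t = 0"
proof -
  define h' where "h' t = indicator {0..1} t *\<^sub>R h t" for t
  have lb: "integrable lborel h'"
    using h unfolding unit_interval_measure_def h'_def by (subst (asm) integrable_restrict_space) auto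
  have si: "set_integrable lborel S h'" if "S \<in> sets lborel" for S
    unfolding set_integrable_def by (rule integrable_mult_indicator[OF that lb])
  have ib: "h' integrable_on cbox u v" for u v :: real
    by (rule set_borel_integral_eq_integral(1)[OF si]) simp
  obtain N where N: "negligible N"
    and Nprop: "\<And>x e. \<lbrakk>x \<notin> N; 0 < e\<rbrakk> \<Longrightarrow>
               \<exists>d>0. \<forall>\<delta>. 0 < \<delta> \<and> \<delta> < d \<longrightarrow>
                         norm(integral (cbox x (x + \<delta> *\<^sub>R One)) h' /\<^sub>R \<delta> ^ DIM(real) - h' x) < e"
    using integrable_ccontinuous_explicit[of h'] ib by blast
  have key: "h x = 0" if x: "0 < x" "x < 1" "x \<notin> N" for x
  proof (rule ccontr)
    assume hx: "h x \<noteq> 0"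
    define e where "e = norm (h x)"
    have e: "e > 0" using hx unfolding e_def by simp
    obtain d where d: "d > 0" and dp: "\<And>\<delta>. 0 < \<delta> \<Longrightarrow> \<delta> < d \<Longrightarrow>
        norm(integral (cbox x (x + \<delta> *\<^sub>R One)) h' /\<^sub>R \<delta> ^ DIM(real) - h' x) < e"
      using Nprop[OF x(3) e] by blast
    define \<delta> where "\<delta> = min (d / 2) ((1 - x) / 2)"
    have d1: "\<delta> \<le> (1 - x) / 2" unfolding \<delta>_def by (rule min.cobounded2)
    have d2: "\<delta> \<le> d / 2" unfolding \<delta>_def by (rule min.cobounded1)
    have d0: "0 < \<delta>" unfolding \<delta>_def using d x by simp
    have d3: "x + \<delta> < 1"
    proof -
      have "x + \<delta> \<le> x + (1 - x) / 2" using d1 by simp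
      also have "\<dots> < 1" using x(2) by (simp add: field_simps)
      finally show ?thesis .
    qed
    have \<delta>: "0 < \<delta>" "\<delta> < d" "x + \<delta> < 1" using d0 d2 d d3 by linarith+
    have "integral {x..x + \<delta>} h' = (LINT t:{x..x + \<delta>}|lborel. h' t)"
      by (rule set_borel_integral_eq_integral(2)[OF si, symmetric]) simp
    also have "\<dots> = (\<integral>t. indicator {x..x + \<delta>} t *\<^sub>R h t \<partial>unit_interval_measure)"
      unfolding set_lebesgue_integral_def unit_interval_measure_def h'_def
      by (subst integral_restrict_space) (auto intro!: Bochner_Integration.integral_cong split: split_indicator)
    also have "\<dots> = 0" by (rule interval_zero[OF h hz]) (use x \<delta> in auto)
    finally have "integral {x..x + \<delta>} h' = 0" .
    moreover have "cbox x (x + \<delta> *\<^sub>R One) = {x..x + \<delta>}" by simp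
    moreover have "h' x = h x" unfolding h'_def using x by simp
    ultimately have "norm (0 - h x) < e" using dp[OF \<delta>(1,2)] by simp
    then show False unfolding e_def by simp
  qed
  have "N \<in> null_sets lebesgue" using N by (simp add: negligible_iff_null_sets)
  then have "AE x in lebesgue. x \<notin> N" by (rule AE_not_in)
  then have "AE x in lborel. x \<notin> N" by (simp add: AE_completion_iff)
  moreover have "AE x in lborel. x \<noteq> (0::real)" by (rule AE_lborel_singleton)
  moreover have "AE x in lborel. x \<noteq> (1::real)" by (rule AE_lborel_singleton)
  ultimately have "AE x in lborel. x \<in> {0..1} \<longrightarrow> h x = 0"
  proof eventually_elim
    case (elim x)
    show ?case
    proof
      assume "x \<in> {0..1}"
      then have "0 < x" "x < 1" using elim by auto
      then show "h x = 0" using key elim by blast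
    qed
  qed
  then show ?thesis unfolding unit_interval_measure_def by (subst AE_restrict_space_iff) auto
qed

lemma cube_null:
  fixes V :: "'i set" and w :: "('i \<Rightarrow> real) \<Rightarrow> real"
  assumes V: "finite V" "p \<in> V" and Z: "Z \<in> null_sets lborel"
    and w: "w \<in> borel_measurable (unit_cube V)" and wp: "\<And>x s. w (x(p := s)) = w x"
  shows "AE x in unit_cube V. x p + w x \<notin> Z"
proof -
  interpret P: product_sigma_finite "\<lambda>_::'i. unit_interval_measure" by (rule product_sigma_finite_uim)
  define M where "M = unit_cube V"
  define u where "u x = x p + w x" for x
  have um: "u \<in> borel_measurable M" unfolding u_def M_def
    by (rule borel_measurable_add[OF cube_comp_meas[OF V(2)] w])
  have Zs: "Z \<in> sets borel" using Z by (auto dest: null_setsD2)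
  define S where "S = u -` Z \<inter> space M"
  have Ss: "S \<in> sets M" unfolding S_def by (rule measurable_sets[OF um Zs])
  have eqV: "insert p (V - {p}) = V" using V by auto
  have *: "integral\<^sup>N (Pi\<^sub>M (insert p (V - {p})) (\<lambda>_. unit_interval_measure)) (indicator S)
     = (\<integral>\<^sup>+ x. (\<integral>\<^sup>+ y. indicator S (x(p := y)) \<partial>unit_interval_measure) \<partial>Pi\<^sub>M (V - {p}) (\<lambda>_. unit_interval_measure))"
  proof (rule P.product_nn_integral_insert)
    show "indicator S \<in> borel_measurable (Pi\<^sub>M (insert p (V - {p})) (\<lambda>_. unit_interval_measure))"
      unfolding eqV using Ss unfolding M_def unit_cube_def by (rule borel_measurable_indicator)
  qed (use V in auto)
  have "emeasure M S = (\<integral>\<^sup>+x. indicator S x \<partial>M)" using Ss by simp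
  also have "\<dots> = (\<integral>\<^sup>+ x. (\<integral>\<^sup>+ y. indicator S (x(p := y)) \<partial>unit_interval_measure) \<partial>Pi\<^sub>M (V - {p}) (\<lambda>_. unit_interval_measure))"
    using * unfolding eqV M_def unit_cube_def .
  also have "\<dots> \<le> (\<integral>\<^sup>+ x. 0 \<partial>Pi\<^sub>M (V - {p}) (\<lambda>_. unit_interval_measure))"
  proof (rule nn_integral_mono)
    fix x
    define T where "T = {s. s - (- w x) \<in> Z}"
    have Tn: "T \<in> null_sets lborel" unfolding T_def by (rule null_sets_translation[OF Z])
    have "(\<integral>\<^sup>+ y. indicator S (x(p := y)) \<partial>unit_interval_measure) \<le> (\<integral>\<^sup>+ s. indicator T s \<partial>unit_interval_measure)"
    proof (rule nn_integral_mono)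
      fix s
      show "indicator S (x(p := s)) \<le> (indicator T s :: ennreal)"
      proof (cases "x(p := s) \<in> S")
        case True
        then have "u (x(p := s)) \<in> Z" unfolding S_def by auto
        then have "s + w x \<in> Z" unfolding u_def using wp by simp
        then have "s \<in> T" unfolding T_def by simp
        then show ?thesis using True by simp
      qed simp
    qed
    also have "(\<integral>\<^sup>+ s. indicator T s \<partial>unit_interval_measure) = (\<integral>\<^sup>+ s. indicator T s * indicator {0..1} s \<partial>lborel)"
      unfolding unit_interval_measure_def by (rule nn_integral_restrict_space) simp
    also have "\<dots> \<le> (\<integral>\<^sup>+ s. indicator T s \<partial>lborel)"
      by (rule nn_integral_mono) (simp split: split_indicator)
    also have "\<dots> = emeasure lborel T" by (rule nn_integral_indicator[OF null_setsD2[OF Tn]])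
    also have "\<dots> = 0" by (rule null_setsD1[OF Tn])
    finally show "(\<integral>\<^sup>+ y. indicator S (x(p := y)) \<partial>unit_interval_measure) \<le> 0" .
  qed
  also have "\<dots> = 0" by simp
  finally have "emeasure M S = 0" by simp
  then have "S \<in> null_sets M" using Ss by (simp add: null_sets_def)
  then have "AE x in M. x p + w x \<notin> Z"
    by (rule AE_I') (auto simp: S_def u_def)
  then show ?thesis unfolding M_def .
qed

lemma prod_diff_bound:
  fixes a b :: "'k \<Rightarrow> complex"
  assumes I: "finite I" and a: "\<And>k. k \<in> I \<Longrightarrow> norm (a k) \<le> C" and b: "\<And>k. k \<in> I \<Longrightarrow> norm (b k) \<le> C"
    and C: "1 \<le> C"
  shows "norm ((\<Prod>k\<in>I. a k) - (\<Prod>k\<in>I. b k)) \<le> C ^ card I * (\<Sum>k\<in>I. norm (a k - b k))"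
  using I a b
proof (induction I rule: finite_induct)
  case empty then show ?case by simp
next
  case (insert x F)
  define A where "A = (\<Prod>k\<in>F. a k)"
  define B where "B = (\<Prod>k\<in>F. b k)"
  define s where "s = (\<Sum>k\<in>F. norm (a k - b k))"
  have s0: "0 \<le> s" unfolding s_def by (simp add: sum_nonneg)
  have C0: "0 \<le> C" using C by simp
  have IH: "norm (A - B) \<le> C ^ card F * s" unfolding A_def B_def s_def using insert by auto
  have ax: "norm (a x) \<le> C" using insert by auto
  have nB: "norm B \<le> C ^ card F"
  proof -
    have "norm B \<le> (\<Prod>k\<in>F. norm (b k))" unfolding B_def by (rule norm_prod_le)
    also have "\<dots> \<le> (\<Prod>k\<in>F. C)" by (rule prod_mono) (use insert in auto)
    also have "\<dots> = C ^ card F" by simp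
    finally show ?thesis .
  qed
  have Cp: "C ^ card F \<le> C ^ Suc (card F)" using C by (simp add: power_increasing)
  have "(\<Prod>k\<in>insert x F. a k) - (\<Prod>k\<in>insert x F. b k) = a x * (A - B) + (a x - b x) * B"
    using insert unfolding A_def B_def by (simp add: algebra_simps)
  then have "norm ((\<Prod>k\<in>insert x F. a k) - (\<Prod>k\<in>insert x F. b k)) \<le> norm (a x) * norm (A - B) + norm (a x - b x) * norm B"
    by (metis norm_mult norm_triangle_ineq)
  also have "\<dots> \<le> C * (C ^ card F * s) + norm (a x - b x) * C ^ card F"
    by (intro add_mono mult_mono ax IH nB) (use C0 in auto)
  also have "\<dots> \<le> C ^ Suc (card F) * s + C ^ Suc (card F) * norm (a x - b x)"
  proof (rule add_mono)
    show "C * (C ^ card F * s) \<le> C ^ Suc (card F) * s" by (simp add: mult.assoc)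
    have "norm (a x - b x) * C ^ card F \<le> norm (a x - b x) * C ^ Suc (card F)"
      by (rule mult_left_mono[OF Cp norm_ge_zero])
    then show "norm (a x - b x) * C ^ card F \<le> C ^ Suc (card F) * norm (a x - b x)"
      by (simp add: mult.commute)
  qed
  also have "\<dots> = C ^ card (insert x F) * (\<Sum>k\<in>insert x F. norm (a k - b k))"
    using insert unfolding s_def by (simp add: algebra_simps)
  finally show ?case .
qed

lemma finite_N0:
  assumes "finite I" and "\<And>k. k \<in> I \<Longrightarrow> \<exists>N0::nat. \<forall>N\<ge>N0. P k N"
  shows "\<exists>N0. \<forall>N\<ge>N0. \<forall>k\<in>I. P k N"
  using assms
proof (induction I rule: finite_induct)
  case empty then show ?case by simp
next
  case (insert x F)
  then obtain N1 where N1: "\<forall>N\<ge>N1. \<forall>k\<in>F. P k N" by auto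
  obtain N2 where N2: "\<forall>N\<ge>N2. P x N" using insert.prems[of x] by blast
  have "\<forall>N\<ge>max N1 N2. \<forall>k\<in>insert x F. P k N" using N1 N2 by auto
  then show ?case by blast
qed

lemma unif_prod:
  fixes A :: "nat \<Rightarrow> 'k \<Rightarrow> 'x \<Rightarrow> complex" and B :: "'k \<Rightarrow> 'x \<Rightarrow> complex"
  assumes I: "finite I"
    and U: "\<And>k. k \<in> I \<Longrightarrow> \<forall>\<epsilon>>0. \<exists>N0. \<forall>N\<ge>N0. \<forall>x. norm (A N k x - B k x) \<le> \<epsilon>"
    and bA: "\<And>N k x. k \<in> I \<Longrightarrow> norm (A N k x) \<le> C"
    and bB: "\<And>k x. k \<in> I \<Longrightarrow> norm (B k x) \<le> C" and C: "1 \<le> C"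
  shows "\<forall>\<epsilon>>0. \<exists>N0. \<forall>N\<ge>N0. \<forall>x. norm ((\<Prod>k\<in>I. A N k x) - (\<Prod>k\<in>I. B k x)) \<le> \<epsilon>"
proof (intro allI impI)
  fix \<epsilon> :: real assume e: "\<epsilon> > 0"
  define \<delta> where "\<delta> = \<epsilon> / (C ^ card I * (real (card I) + 1))"
  have Cpos: "0 < C ^ card I" using C by simp
  have d: "\<delta> > 0" unfolding \<delta>_def using e Cpos by simp
  obtain N0 where N0: "\<forall>N\<ge>N0. \<forall>k\<in>I. \<forall>x. norm (A N k x - B k x) \<le> \<delta>"
    using finite_N0[OF I, of "\<lambda>k N. \<forall>x. norm (A N k x - B k x) \<le> \<delta>"] U d by blast
  show "\<exists>N0. \<forall>N\<ge>N0. \<forall>x. norm ((\<Prod>k\<in>I. A N k x) - (\<Prod>k\<in>I. B k x)) \<le> \<epsilon>"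
  proof (intro exI allI impI)
    fix N x assume N: "N0 \<le> N"
    have "norm ((\<Prod>k\<in>I. A N k x) - (\<Prod>k\<in>I. B k x)) \<le> C ^ card I * (\<Sum>k\<in>I. norm (A N k x - B k x))"
      by (rule prod_diff_bound[OF I bA bB C])
    also have "\<dots> \<le> C ^ card I * (\<Sum>k\<in>I. \<delta>)"
      using N0 N Cpos by (intro mult_left_mono sum_mono) auto
    also have "\<dots> = (C ^ card I * \<delta>) * real (card I)" by (simp add: mult_ac)
    also have "C ^ card I * \<delta> = \<epsilon> / (real (card I) + 1)"
    proof -
      have "C ^ card I * \<delta> = (C ^ card I * \<epsilon>) / (C ^ card I * (real (card I) + 1))"
        unfolding \<delta>_def by simp
      also have "\<dots> = \<epsilon> / (real (card I) + 1)"
        by (rule mult_divide_mult_cancel_left) (use C in simp)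
      finally show ?thesis .
    qed
    also have "\<epsilon> / (real (card I) + 1) * real (card I) \<le> \<epsilon> / (real (card I) + 1) * (real (card I) + 1)"
      using e by (intro mult_left_mono) auto
    also have "\<dots> = \<epsilon>" by simp
    finally show "norm ((\<Prod>k\<in>I. A N k x) - (\<Prod>k\<in>I. B k x)) \<le> \<epsilon>" .
  qed
qed

lemma int_bound:
  fixes f :: "'a \<Rightarrow> complex"
  assumes M: "prob_space M" and B: "\<And>x. x \<in> space M \<Longrightarrow> norm (f x) \<le> B"
  shows "norm (integral\<^sup>L M f) \<le> B"
proof -
  interpret prob_space M by (rule M)
  obtain x0 where "x0 \<in> space M" using not_empty by blast
  then have B0: "0 \<le> B" using B[of x0] by (meson norm_ge_zero order_trans)
  show ?thesis
  proof (cases "integrable M f")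
    case True
    have "norm (integral\<^sup>L M f) \<le> (\<integral>x. norm (f x) \<partial>M)" by (rule integral_norm_bound)
    also have "\<dots> \<le> (\<integral>x. B \<partial>M)"
      by (rule integral_mono_AE) (use True B in \<open>auto intro!: AE_I2\<close>)
    also have "\<dots> = B" by (simp add: prob_space)
    finally show ?thesis .
  next
    case False
    then show ?thesis using B0 by (simp add: not_integrable_integral_eq)
  qed
qed

lemma int_close:
  fixes f g :: "'a \<Rightarrow> complex"
  assumes M: "prob_space M" and f: "f \<in> borel_measurable M" and g: "g \<in> borel_measurable M"
    and bf: "\<And>x. x \<in> space M \<Longrightarrow> norm (f x) \<le> B" and bg: "\<And>x. x \<in> space M \<Longrightarrow> norm (g x) \<le> B"
    and c: "\<And>x. x \<in> space M \<Longrightarrow> norm (f x - g x) \<le> \<epsilon>"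
  shows "norm (integral\<^sup>L M f - integral\<^sup>L M g) \<le> \<epsilon>"
proof -
  interpret prob_space M by (rule M)
  have fi: "integrable M f" by (rule integrable_const_bound[where B=B]) (use f bf in auto)
  have gi: "integrable M g" by (rule integrable_const_bound[where B=B]) (use g bg in auto)
  have "integral\<^sup>L M f - integral\<^sup>L M g = (\<integral>x. f x - g x \<partial>M)"
    by (simp add: Bochner_Integration.integral_diff[OF fi gi])
  also have "norm \<dots> \<le> \<epsilon>" by (rule int_bound[OF M c])
  finally show ?thesis .
qed

lemma prod_reindex_LL:
  fixes g :: "nat \<Rightarrow> nat \<Rightarrow> 'a::comm_monoid_mult"
  assumes L: "0 < L"
  shows "(\<Prod>k<L * L. g (k mod L) (k div L)) = (\<Prod>i<L. \<Prod>j<L. g i j)"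
proof -
  have "(\<Prod>k<L * L. g (k mod L) (k div L)) = (\<Prod>p\<in>{..<L}\<times>{..<L}. g (fst p) (snd p))"
  proof (rule prod.reindex_bij_witness[of _ "\<lambda>p. fst p + snd p * L" "\<lambda>k. (k mod L, k div L)"])
    fix k assume k: "k \<in> {..<L * L}"
    show "fst (k mod L, k div L) + snd (k mod L, k div L) * L = k" by simp
    show "(k mod L, k div L) \<in> {..<L} \<times> {..<L}" using k L by (auto simp: less_mult_imp_div_less)
  next
    fix p assume p: "p \<in> {..<L} \<times> {..<L}"
    then obtain i j where ij: "p = (i, j)" "i < L" "j < L" by auto
    have "i + j * L < L * L"
    proof -
      have "i + j * L < L + j * L" using ij by simp
      also have "\<dots> = (j + 1) * L" by simp
      also have "\<dots> \<le> L * L" using ij by (intro mult_right_mono) auto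
      finally show ?thesis .
    qed
    then show "fst p + snd p * L \<in> {..<L * L}" using ij by simp
    show "((fst p + snd p * L) mod L, (fst p + snd p * L) div L) = p" using ij by simp
  qed auto
  also have "\<dots> = (\<Prod>i<L. \<Prod>j<L. g i j)" by (rule prod_pairs[symmetric])
  finally show ?thesis .
qed

lemma periodic_int:
  assumes p: "\<And>x. g (x + 1) = g (x::real)"
  shows "g (x + of_int n) = g x"
proof -
  have nat: "g (y + of_nat m) = g y" for y m
  proof (induction m)
    case 0 then show ?case by simp
  next
    case (Suc m)
    have "y + real (Suc m) = (y + real m) + 1" by simp
    then show ?case using p[of "y + real m"] Suc by (simp only:)
  qed
  show ?thesis
  proof (cases "n \<ge> 0")
    case True
    have "g (x + of_int n) = g (x + of_nat (nat n))" using True by simp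
    also have "\<dots> = g x" by (rule nat)
    finally show ?thesis .
  next
    case False
    have e: "(x + of_int n) + of_nat (nat (- n)) = x" using False by simp
    have "g (x + of_int n) = g ((x + of_int n) + of_nat (nat (- n)))" by (rule nat[symmetric])
    also have "\<dots> = g x" by (simp only: e)
    finally show ?thesis .
  qed
qed

lemma abs_conv_summable:
  "abs_conv_fourier g \<Longrightarrow> (\<lambda>m. norm (fourier_coeff g m)) summable_on UNIV"
  unfolding abs_conv_fourier_def by blast

lemma ae_fs:
  assumes g: "abs_conv_fourier g"
  shows "AE t in unit_interval_measure. complex_of_real (g t) = FS (fourier_coeff g) t"
proof -
  define c where "c = fourier_coeff g"
  have S: "(\<lambda>m. norm (c m)) summable_on UNIV" unfolding c_def by (rule abs_conv_summable[OF g])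
  have gi: "set_integrable lborel {0..1} g" and gm: "g \<in> borel_measurable borel"
    using g unfolding abs_conv_fourier_def by auto
  define h where "h t = complex_of_real (g t) - FS c t" for t
  have i1: "integrable unit_interval_measure (\<lambda>t. complex_of_real (g t))" by (rule integrable_uim_of_real[OF gi])
  have Fm: "FS c \<in> borel_measurable unit_interval_measure" by (rule borel_uim[OF FS_borel[OF S]])
  have i2: "integrable unit_interval_measure (FS c)"
    by (rule uim.integrable_const_bound[where B = "infsum (\<lambda>m. norm (c m)) UNIV"]) (use FS_bound[OF S] Fm in auto)
  have hi: "integrable unit_interval_measure h" unfolding h_def using i1 i2 by simp
  have hz: "(\<integral>t. h t * ee (of_int k * t) \<partial>unit_interval_measure) = 0" for k :: int
  proof -
    have j1: "integrable unit_interval_measure (\<lambda>t. complex_of_real (g t) * ee (of_int k * t))"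
      by (rule int_cont[OF i1]) (auto intro!: continuous_intros)
    have j2m: "(\<lambda>t. FS c t * ee (of_int k * t)) \<in> borel_measurable unit_interval_measure"
      by (rule borel_uim) (use FS_borel[OF S] in measurable)
    have j2: "integrable unit_interval_measure (\<lambda>t. FS c t * ee (of_int k * t))"
      by (rule uim.integrable_const_bound[where B = "infsum (\<lambda>m. norm (c m)) UNIV"])
         (use FS_bound[OF S] j2m in \<open>auto simp: norm_mult\<close>)
    have "(\<integral>t. h t * ee (of_int k * t) \<partial>unit_interval_measure)
        = (\<integral>t. complex_of_real (g t) * ee (of_int k * t) - FS c t * ee (of_int k * t) \<partial>unit_interval_measure)"
      unfolding h_def by (simp add: algebra_simps)
    also have "\<dots> = (\<integral>t. complex_of_real (g t) * ee (of_int k * t) \<partial>unit_interval_measure)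
                 - (\<integral>t. FS c t * ee (of_int k * t) \<partial>unit_interval_measure)"
      by (rule Bochner_Integration.integral_diff[OF j1 j2])
    also have "(\<integral>t. complex_of_real (g t) * ee (of_int k * t) \<partial>unit_interval_measure) = c (- k)"
      unfolding c_def fourier_coeff_uim by simp
    also have "(\<integral>t. FS c t * ee (of_int k * t) \<partial>unit_interval_measure) = c (- k)"
      by (rule FS_coeff[OF S])
    finally show ?thesis by simp
  qed
  have "AE t in unit_interval_measure. h t = 0" by (rule fourier_unique[OF hi hz])
  then show ?thesis unfolding h_def c_def by simp
qed

lemma null_fs:
  assumes g: "abs_conv_fourier g"
  shows "{t. complex_of_real (g t) \<noteq> FS (fourier_coeff g) t} \<in> null_sets lborel"
proof -
  define c where "c = fourier_coeff g"
  have S: "(\<lambda>m. norm (c m)) summable_on UNIV" unfolding c_def by (rule abs_conv_summable[OF g])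
  have gm[measurable]: "g \<in> borel_measurable borel" and gp: "\<And>x. g (x + 1) = g x"
    using g unfolding abs_conv_fourier_def by auto
  have Fm[measurable]: "FS c \<in> borel_measurable borel" by (rule FS_borel[OF S])
  define E where "E = {t. complex_of_real (g t) \<noteq> FS c t}"
  have Es[measurable]: "E \<in> sets borel" unfolding E_def by measurable
  have ae0: "AE t in lborel. t \<in> {0..1} \<longrightarrow> t \<notin> E"
  proof -
    have "AE t in unit_interval_measure. t \<notin> E" using ae_fs[OF g] unfolding E_def c_def by simp
    then show ?thesis unfolding unit_interval_measure_def by (subst (asm) AE_restrict_space_iff) auto
  qed
  have aen: "AE t in lborel. t \<in> {of_int n..of_int n + 1} \<longrightarrow> t \<notin> E" for n :: int
  proof -
    have per: "t \<in> E \<longleftrightarrow> t + of_int n \<in> E" for t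
      unfolding E_def using periodic_int[of g, OF gp] FS_periodic[of c] by simp
    have "AE x in lborel. (of_int n + x) \<in> {of_int n..of_int n + 1} \<longrightarrow> (of_int n + x) \<notin> E"
      using ae0
    proof eventually_elim
      case (elim x)
      show ?case
      proof
        assume "of_int n + x \<in> {of_int n..of_int n + 1}"
        then have "x \<in> {0..1}" by auto
        then have "x \<notin> E" using elim by blast
        then show "of_int n + x \<notin> E" using per[of x] by (metis add.commute)
      qed
    qed
    then have "AE x in distr lborel borel ((+) (of_int n)). x \<in> {of_int n..of_int n + 1} \<longrightarrow> x \<notin> E"
      by (subst AE_distr_iff) auto
    then show ?thesis unfolding lborel_distr_plus .
  qed
  have "AE t in lborel. \<forall>n::int. t \<in> {of_int n..of_int n + 1} \<longrightarrow> t \<notin> E"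
    unfolding AE_all_countable by (intro allI aen)
  then have "AE t in lborel. t \<notin> E"
  proof eventually_elim
    case (elim t)
    have "t \<in> {of_int \<lfloor>t\<rfloor>..of_int \<lfloor>t\<rfloor> + 1}" by simp
    then show ?case using elim by blast
  qed
  then have "E \<in> null_sets lborel" by (subst AE_iff_null_sets) auto
  then show ?thesis unfolding E_def c_def .
qed

lemma cube_diff_meas:
  assumes g: "g \<in> borel_measurable borel" and "p \<in> V" "q \<in> V"
  shows "(\<lambda>x. g (x p - x q)) \<in> borel_measurable (unit_cube V)"
  by (rule measurable_compose[OF borel_measurable_diff[OF cube_comp_meas cube_comp_meas] g]) (use assms in auto)

lemma cube_u_meas:
  assumes g: "g \<in> borel_measurable borel" and "a \<in> V" "b \<in> V"
  shows "(\<lambda>x. g (c - x a + x b)) \<in> borel_measurable (unit_cube V)"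
  by (rule measurable_compose[OF borel_measurable_add[OF borel_measurable_diff[OF borel_measurable_const cube_comp_meas] cube_comp_meas] g])
     (use assms in auto)

lemma pair_comp_meas1: "v \<in> V \<Longrightarrow> (\<lambda>z. fst z v) \<in> borel_measurable (unit_cube V \<Otimes>\<^sub>M N)"
  by (rule measurable_compose[OF measurable_fst cube_comp_meas])

lemma pair_comp_meas2: "v \<in> V \<Longrightarrow> (\<lambda>z. snd z v) \<in> borel_measurable (N \<Otimes>\<^sub>M unit_cube V)"
  by (rule measurable_compose[OF measurable_snd cube_comp_meas])

lemma pair_u_meas:
  assumes g: "g \<in> borel_measurable borel" and "a \<in> V" "a' \<in> V" "b \<in> V" "b' \<in> V"
  shows "(\<lambda>z. g (fst z a - fst z a' - snd z b + snd z b')) \<in> borel_measurable (unit_cube V \<Otimes>\<^sub>M unit_cube V)"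
  by (rule measurable_compose[OF _ g])
     (intro borel_measurable_add borel_measurable_diff pair_comp_meas1 pair_comp_meas2; use assms in auto)

lemma succ_mod_neq: "2 \<le> (n::nat) \<Longrightarrow> k < n \<Longrightarrow> (k + 1) mod n \<noteq> k"
  by (cases "k + 1 < n") (auto simp: mod_if)

theorem mainTheorem3:
  fixes L :: nat and f :: "nat \<Rightarrow> nat \<Rightarrow> real \<Rightarrow> real"
  assumes "L \<ge> 2"
    and "\<forall>i<L. \<forall>j<L. abs_conv_fourier (f i j)"
  shows "(\<integral>xa. (\<integral>xb. (\<Prod>i<L. \<Prod>j<L.
              f i j (xa (i, j) - xa (i, (j + 1) mod L) - xb (i, j) + xb ((i + 1) mod L, j)))
            \<partial>unit_cube ({..<L} \<times> {..<L})) \<partial>unit_cube ({..<L} \<times> {..<L}))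
       = (\<integral>x. (\<Prod>k<L * L. f (k mod L) (k div L) (x ((k + 1) mod (L * L)) - x k))
            \<partial>unit_cube {..<L * L})"
proof -
  have L0: "0 < L" and L2: "2 \<le> L" using assms(1) by auto
  have n0: "0 < L * L" and n2: "2 \<le> L * L" using L2 by (auto intro: order_trans[OF _ mult_le_mono[of 1 L 2 L]])
  define K where "K = {..<L} \<times> {..<L}"
  have finK: "finite K" unfolding K_def by simp
  define fc where "fc i j = fourier_coeff (f i j)" for i j
  define G where "G i j = FS (fc i j)" for i j
  define E where "E i j = {t. complex_of_real (f i j t) \<noteq> G i j t}" for i j
  have acf: "abs_conv_fourier (f i j)" if "i < L" "j < L" for i j using assms(2) that by blast
  have S: "(\<lambda>m. norm (fc i j m)) summable_on UNIV" if "i < L" "j < L" for i j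
    unfolding fc_def by (rule abs_conv_summable[OF acf[OF that]])
  have En: "E i j \<in> null_sets lborel" if "i < L" "j < L" for i j
    unfolding E_def G_def fc_def by (rule null_fs[OF acf[OF that]])
  have fm: "(\<lambda>t. complex_of_real (f i j t)) \<in> borel_measurable borel" if "i < L" "j < L" for i j
    using acf[OF that] unfolding abs_conv_fourier_def
    by (intro measurable_compose[OF _ borel_measurable_of_real]) auto
  have Gm: "G i j \<in> borel_measurable borel" if "i < L" "j < L" for i j
    unfolding G_def by (rule FS_borel[OF S[OF that]])
  have PSm: "PS (fc i j) N \<in> borel_measurable borel" for i j N by (rule PS_borel)
  define T where "T i j = infsum (\<lambda>m. norm (fc i j m)) UNIV" for i j
  define C where "C = 1 + (\<Sum>p\<in>K. T (fst p) (snd p))"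
  have T0: "0 \<le> T i j" for i j unfolding T_def by (rule infsum_nonneg) simp
  have TC: "T i j \<le> C" if "i < L" "j < L" for i j
  proof -
    have "T i j = T (fst (i, j)) (snd (i, j))" by simp
    also have "\<dots> \<le> (\<Sum>p\<in>K. T (fst p) (snd p))"
      by (rule member_le_sum) (use that T0 finK in \<open>auto simp: K_def\<close>)
    finally show ?thesis unfolding C_def by simp
  qed
  have C1: "1 \<le> C" unfolding C_def using T0 by (simp add: sum_nonneg)
  have bPS: "norm (PS (fc i j) N t) \<le> C" if "i < L" "j < L" for i j N t
    by (rule order_trans[OF PS_bound[OF S[OF that]] TC[OF that, unfolded T_def]])
  have bG: "norm (G i j t) \<le> C" if "i < L" "j < L" for i j t
    unfolding G_def by (rule order_trans[OF FS_bound[OF S[OF that]] TC[OF that, unfolded T_def]])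
  have U: "\<forall>\<epsilon>>0. \<exists>N0. \<forall>N\<ge>N0. \<forall>t. norm (PS (fc i j) N t - G i j t) \<le> \<epsilon>" if "i < L" "j < L" for i j
    unfolding G_def by (rule FS_unif[OF S[OF that]])
  have divL: "k mod L < L" "k div L < L" if "k < L * L" for k
    using that L0 by (auto simp: less_mult_imp_div_less)
  define W where "W N = (\<Sum>c\<in>{- int N..int N}. \<Prod>i<L. \<Prod>j<L. fc i j c)" for N

  define M where "M = unit_cube {..<L * L}"
  have Mp: "prob_space M" unfolding M_def by (rule prob_space_cube)
  have R1: "complex_of_real (\<integral>x. (\<Prod>k<L * L. f (k mod L) (k div L) (x ((k + 1) mod (L * L)) - x k)) \<partial>unit_cube {..<L * L})
     = (\<integral>x. (\<Prod>k<L * L. complex_of_real (f (k mod L) (k div L) (x ((k + 1) mod (L * L)) - x k))) \<partial>M)"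
    unfolding M_def by (simp only: of_real_prod[symmetric] integral_complex_of_real)
  have R2: "(\<integral>x. (\<Prod>k<L * L. complex_of_real (f (k mod L) (k div L) (x ((k + 1) mod (L * L)) - x k))) \<partial>M)
     = (\<integral>x. (\<Prod>k<L * L. G (k mod L) (k div L) (x ((k + 1) mod (L * L)) - x k)) \<partial>M)"
  proof (rule integral_cong_AE)
    show "(\<lambda>x. \<Prod>k<L * L. complex_of_real (f (k mod L) (k div L) (x ((k + 1) mod (L * L)) - x k))) \<in> borel_measurable M"
      unfolding M_def by (intro borel_measurable_prod cube_diff_meas fm divL) (use n0 in auto)
    show "(\<lambda>x. \<Prod>k<L * L. G (k mod L) (k div L) (x ((k + 1) mod (L * L)) - x k)) \<in> borel_measurable M"
      unfolding M_def by (intro borel_measurable_prod cube_diff_meas Gm divL) (use n0 in auto)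
    have "AE x in M. \<forall>k\<in>{..<L * L}. x ((k + 1) mod (L * L)) + (- x k) \<notin> E (k mod L) (k div L)"
    proof (rule AE_finite_allI)
      fix k assume k: "k \<in> {..<L * L}"
      show "AE x in M. x ((k + 1) mod (L * L)) + (- x k) \<notin> E (k mod L) (k div L)"
        unfolding M_def
      proof (rule cube_null)
        show "(k + 1) mod (L * L) \<in> {..<L * L}" using n0 by simp
        show "E (k mod L) (k div L) \<in> null_sets lborel" using k by (intro En divL) auto
        show "(\<lambda>x. - x k) \<in> borel_measurable (unit_cube {..<L * L})"
          using k by (intro borel_measurable_uminus cube_comp_meas)
        have "(k + 1) mod (L * L) \<noteq> k" using succ_mod_neq[OF n2, of k] k by simp
        then have "k \<noteq> (k + 1) mod (L * L)" by (rule not_sym)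
        then show "\<And>x s. - (x((k + 1) mod (L * L) := s)) k = - x k" by simp
      qed simp
    qed simp
    then show "AE x in M. (\<Prod>k<L * L. complex_of_real (f (k mod L) (k div L) (x ((k + 1) mod (L * L)) - x k)))
        = (\<Prod>k<L * L. G (k mod L) (k div L) (x ((k + 1) mod (L * L)) - x k))"
    proof eventually_elim
      case (elim x)
      show ?case
      proof (rule prod.cong[OF refl])
        fix k assume "k \<in> {..<L * L}"
        then have "x ((k + 1) mod (L * L)) - x k \<notin> E (k mod L) (k div L)" using elim by simp
        then show "complex_of_real (f (k mod L) (k div L) (x ((k + 1) mod (L * L)) - x k))
             = G (k mod L) (k div L) (x ((k + 1) mod (L * L)) - x k)" unfolding E_def by simp
      qed
    qed
  qed
  have R3: "(\<lambda>N. \<integral>x. (\<Prod>k<L * L. PS (fc (k mod L) (k div L)) N (x ((k + 1) mod (L * L)) - x k)) \<partial>M)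
      \<longlonglongrightarrow> (\<integral>x. (\<Prod>k<L * L. G (k mod L) (k div L) (x ((k + 1) mod (L * L)) - x k)) \<partial>M)"
  proof (rule unif_lim_integral[OF Mp])
    show "(\<lambda>x. \<Prod>k<L * L. PS (fc (k mod L) (k div L)) N (x ((k + 1) mod (L * L)) - x k)) \<in> borel_measurable M" for N
      unfolding M_def by (intro borel_measurable_prod cube_diff_meas PSm) (use n0 in auto)
    show "(\<lambda>x. \<Prod>k<L * L. G (k mod L) (k div L) (x ((k + 1) mod (L * L)) - x k)) \<in> borel_measurable M"
      unfolding M_def by (intro borel_measurable_prod cube_diff_meas Gm divL) (use n0 in auto)
    show "norm (\<Prod>k<L * L. G (k mod L) (k div L) (x ((k + 1) mod (L * L)) - x k)) \<le> C ^ card {..<L * L}" for x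
    proof -
      have "norm (\<Prod>k<L * L. G (k mod L) (k div L) (x ((k + 1) mod (L * L)) - x k))
          \<le> (\<Prod>k<L * L. norm (G (k mod L) (k div L) (x ((k + 1) mod (L * L)) - x k)))"
        by (rule norm_prod_le)
      also have "\<dots> \<le> (\<Prod>k<L * L. C)" by (rule prod_mono) (auto intro: bG divL)
      finally show ?thesis by simp
    qed
    have "\<forall>\<epsilon>>0. \<exists>N0. \<forall>N\<ge>N0. \<forall>x. norm ((\<Prod>k\<in>{..<L * L}. PS (fc (k mod L) (k div L)) N (x ((k + 1) mod (L * L)) - x k))
        - (\<Prod>k\<in>{..<L * L}. G (k mod L) (k div L) (x ((k + 1) mod (L * L)) - x k))) \<le> \<epsilon>"
    proof (rule unif_prod[OF finite_lessThan _ _ _ C1])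
      fix k assume k: "k \<in> {..<L * L}"
      then have ij: "k mod L < L" "k div L < L" using divL by auto
      show "\<forall>\<epsilon>>0. \<exists>N0. \<forall>N\<ge>N0. \<forall>x. norm (PS (fc (k mod L) (k div L)) N (x ((k + 1) mod (L * L)) - x k)
            - G (k mod L) (k div L) (x ((k + 1) mod (L * L)) - x k)) \<le> \<epsilon>"
        using U[OF ij] by meson
      show "norm (PS (fc (k mod L) (k div L)) N (x ((k + 1) mod (L * L)) - x k)) \<le> C" for N x
        by (rule bPS[OF ij])
      show "norm (G (k mod L) (k div L) (x ((k + 1) mod (L * L)) - x k)) \<le> C" for x
        by (rule bG[OF ij])
    qed
    then show "\<forall>\<epsilon>>0. \<exists>N0. \<forall>N\<ge>N0. \<forall>x\<in>space M. norm ((\<Prod>k<L * L. PS (fc (k mod L) (k div L)) N (x ((k + 1) mod (L * L)) - x k))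
        - (\<Prod>k<L * L. G (k mod L) (k div L) (x ((k + 1) mod (L * L)) - x k))) \<le> \<epsilon>"
      by meson
  qed
  have R4: "(\<integral>x. (\<Prod>k<L * L. PS (fc (k mod L) (k div L)) N (x ((k + 1) mod (L * L)) - x k)) \<partial>M) = W N" for N
  proof -
    have "(\<integral>x. (\<Prod>k<L * L. PS (fc (k mod L) (k div L)) N (x ((k + 1) mod (L * L)) - x k)) \<partial>M)
        = (\<Sum>c\<in>{- int N..int N}. \<Prod>k<L * L. fc (k mod L) (k div L) c)"
      unfolding M_def PS_def by (rule trig_rhs[OF n0])
    also have "\<dots> = W N" unfolding W_def by (intro sum.cong refl prod_reindex_LL[OF L0])
    finally show ?thesis .
  qed
  have RHS: "W \<longlonglongrightarrow> complex_of_real (\<integral>x. (\<Prod>k<L * L. f (k mod L) (k div L) (x ((k + 1) mod (L * L)) - x k)) \<partial>unit_cube {..<L * L})"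
    using R3 unfolding R1 R2 R4 .

  define MK where "MK = unit_cube K"
  have MKp: "prob_space MK" unfolding MK_def by (rule prob_space_cube)
  interpret MKs: prob_space MK by (rule MKp)
  define FL where "FL xa xb = (\<Prod>i<L. \<Prod>j<L. complex_of_real (f i j (xa (i, j) - xa (i, (j + 1) mod L) - xb (i, j) + xb ((i + 1) mod L, j))))"
    for xa xb :: "nat \<times> nat \<Rightarrow> real"
  define GL where "GL xa xb = (\<Prod>i<L. \<Prod>j<L. G i j (xa (i, j) - xa (i, (j + 1) mod L) - xb (i, j) + xb ((i + 1) mod L, j)))"
    for xa xb :: "nat \<times> nat \<Rightarrow> real"
  define PL where "PL N xa xb = (\<Prod>i<L. \<Prod>j<L. PS (fc i j) N (xa (i, j) - xa (i, (j + 1) mod L) - xb (i, j) + xb ((i + 1) mod L, j)))"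
    for N and xa xb :: "nat \<times> nat \<Rightarrow> real"
  have inK: "(i, j) \<in> K" "(i, (j + 1) mod L) \<in> K" "((i + 1) mod L, j) \<in> K" if "i < L" "j < L" for i j
    using that L0 unfolding K_def by auto
  have neq: "((i + 1) mod L, j) \<noteq> (i, j)" if "i < L" for i j
    using succ_mod_neq[OF L2 that] by simp
  have norm2: "norm (\<Prod>i<L. \<Prod>j<L. g i j) \<le> (C ^ L) ^ L" if "\<And>i j. i < L \<Longrightarrow> j < L \<Longrightarrow> norm (g i j :: complex) \<le> C" for g
  proof -
    have "norm (\<Prod>i<L. \<Prod>j<L. g i j) = (\<Prod>i<L. \<Prod>j<L. norm (g i j))" by (simp add: prod_norm)
    also have "\<dots> \<le> (\<Prod>i<L. \<Prod>j<L. C)"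
      by (intro prod_mono conjI prod_nonneg) (auto intro: that)
    finally show ?thesis by simp
  qed
  have FLm: "FL xa \<in> borel_measurable MK" for xa
    unfolding FL_def MK_def
  proof (intro borel_measurable_prod)
    fix i j assume "i \<in> {..<L}" "j \<in> {..<L}"
    then have ij: "i < L" "j < L" by auto
    show "(\<lambda>xb. complex_of_real (f i j (xa (i, j) - xa (i, (j + 1) mod L) - xb (i, j) + xb ((i + 1) mod L, j)))) \<in> borel_measurable (unit_cube K)"
      by (rule cube_u_meas[OF fm[OF ij]]) (use inK[OF ij] in auto)
  qed
  have GLm: "GL xa \<in> borel_measurable MK" for xa
    unfolding GL_def MK_def
  proof (intro borel_measurable_prod)
    fix i j assume "i \<in> {..<L}" "j \<in> {..<L}"
    then have ij: "i < L" "j < L" by auto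
    show "(\<lambda>xb. G i j (xa (i, j) - xa (i, (j + 1) mod L) - xb (i, j) + xb ((i + 1) mod L, j))) \<in> borel_measurable (unit_cube K)"
      by (rule cube_u_meas[OF Gm[OF ij]]) (use inK[OF ij] in auto)
  qed
  have PLm: "PL N xa \<in> borel_measurable MK" for N xa
    unfolding PL_def MK_def
  proof (intro borel_measurable_prod)
    fix i j assume "i \<in> {..<L}" "j \<in> {..<L}"
    then have ij: "i < L" "j < L" by auto
    show "(\<lambda>xb. PS (fc i j) N (xa (i, j) - xa (i, (j + 1) mod L) - xb (i, j) + xb ((i + 1) mod L, j))) \<in> borel_measurable (unit_cube K)"
      by (rule cube_u_meas[OF PSm]) (use inK[OF ij] in auto)
  qed
  have GLpm: "(\<lambda>z. GL (fst z) (snd z)) \<in> borel_measurable (MK \<Otimes>\<^sub>M MK)"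
    unfolding GL_def MK_def
  proof (intro borel_measurable_prod)
    fix i j assume "i \<in> {..<L}" "j \<in> {..<L}"
    then have ij: "i < L" "j < L" by auto
    show "(\<lambda>z. G i j (fst z (i, j) - fst z (i, (j + 1) mod L) - snd z (i, j) + snd z ((i + 1) mod L, j))) \<in> borel_measurable (unit_cube K \<Otimes>\<^sub>M unit_cube K)"
      by (rule pair_u_meas[OF Gm[OF ij]]) (use inK[OF ij] in auto)
  qed
  have PLpm: "(\<lambda>z. PL N (fst z) (snd z)) \<in> borel_measurable (MK \<Otimes>\<^sub>M MK)" for N
    unfolding PL_def MK_def
  proof (intro borel_measurable_prod)
    fix i j assume "i \<in> {..<L}" "j \<in> {..<L}"
    then have ij: "i < L" "j < L" by auto
    show "(\<lambda>z. PS (fc i j) N (fst z (i, j) - fst z (i, (j + 1) mod L) - snd z (i, j) + snd z ((i + 1) mod L, j))) \<in> borel_measurable (unit_cube K \<Otimes>\<^sub>M unit_cube K)"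
      by (rule pair_u_meas[OF PSm]) (use inK[OF ij] in auto)
  qed
  have bGL: "norm (GL xa xb) \<le> (C ^ L) ^ L" for xa xb
    unfolding GL_def by (rule norm2) (rule bG)
  have bPL: "norm (PL N xa xb) \<le> (C ^ L) ^ L" for N xa xb
    unfolding PL_def by (rule norm2) (rule bPS)
  have L1: "complex_of_real (\<integral>xa. (\<integral>xb. (\<Prod>i<L. \<Prod>j<L.
              f i j (xa (i, j) - xa (i, (j + 1) mod L) - xb (i, j) + xb ((i + 1) mod L, j)))
            \<partial>unit_cube ({..<L} \<times> {..<L})) \<partial>unit_cube ({..<L} \<times> {..<L}))
      = (\<integral>xa. (\<integral>xb. FL xa xb \<partial>MK) \<partial>MK)"
    unfolding FL_def MK_def K_def by (simp only: of_real_prod[symmetric] integral_complex_of_real)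
  have L2: "(\<integral>xb. FL xa xb \<partial>MK) = (\<integral>xb. GL xa xb \<partial>MK)" for xa
  proof (rule integral_cong_AE[OF FLm GLm])
    have "AE xb in MK. \<forall>p\<in>K. xb ((fst p + 1) mod L, snd p) + (xa p - xa (fst p, (snd p + 1) mod L) - xb p) \<notin> E (fst p) (snd p)"
    proof (rule AE_finite_allI[OF finK])
      fix p assume p: "p \<in> K"
      then obtain i j where pij: "p = (i, j)" and ij: "i < L" "j < L" unfolding K_def by auto
      show "AE xb in MK. xb ((fst p + 1) mod L, snd p) + (xa p - xa (fst p, (snd p + 1) mod L) - xb p) \<notin> E (fst p) (snd p)"
        unfolding MK_def pij fst_conv snd_conv
      proof (rule cube_null[OF finK])
        show "((i + 1) mod L, j) \<in> K" by (rule inK(3)[OF ij])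
        show "E i j \<in> null_sets lborel" by (rule En[OF ij])
        show "(\<lambda>x. xa (i, j) - xa (i, (j + 1) mod L) - x (i, j)) \<in> borel_measurable (unit_cube K)"
          by (intro borel_measurable_diff borel_measurable_const cube_comp_meas inK[OF ij])
        show "\<And>x s. xa (i, j) - xa (i, (j + 1) mod L) - (x(((i + 1) mod L, j) := s)) (i, j)
                 = xa (i, j) - xa (i, (j + 1) mod L) - x (i, j)"
          using neq[OF ij(1), of j] by simp
      qed
    qed
    then show "AE xb in MK. FL xa xb = GL xa xb"
    proof eventually_elim
      case (elim xb)
      show ?case unfolding FL_def GL_def
      proof (intro prod.cong refl)
        fix i j assume "i \<in> {..<L}" "j \<in> {..<L}"
        then have ij: "(i, j) \<in> K" unfolding K_def by auto
        have "xb ((i + 1) mod L, j) + (xa (i, j) - xa (i, (j + 1) mod L) - xb (i, j)) \<notin> E i j"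
          using elim ij by fastforce
        moreover have "xb ((i + 1) mod L, j) + (xa (i, j) - xa (i, (j + 1) mod L) - xb (i, j))
            = xa (i, j) - xa (i, (j + 1) mod L) - xb (i, j) + xb ((i + 1) mod L, j)" by simp
        ultimately have "xa (i, j) - xa (i, (j + 1) mod L) - xb (i, j) + xb ((i + 1) mod L, j) \<notin> E i j"
          by metis
        then show "complex_of_real (f i j (xa (i, j) - xa (i, (j + 1) mod L) - xb (i, j) + xb ((i + 1) mod L, j)))
            = G i j (xa (i, j) - xa (i, (j + 1) mod L) - xb (i, j) + xb ((i + 1) mod L, j))"
          unfolding E_def by simp
      qed
    qed
  qed
  have L3: "(\<lambda>N. \<integral>xa. (\<integral>xb. PL N xa xb \<partial>MK) \<partial>MK) \<longlonglongrightarrow> (\<integral>xa. (\<integral>xb. GL xa xb \<partial>MK) \<partial>MK)"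
  proof (rule unif_lim_integral[OF MKp])
    show "(\<lambda>xa. \<integral>xb. PL N xa xb \<partial>MK) \<in> borel_measurable MK" for N
      by (rule MKs.borel_measurable_lebesgue_integral) (use PLpm[of N] in \<open>simp add: case_prod_beta'\<close>)
    show "(\<lambda>xa. \<integral>xb. GL xa xb \<partial>MK) \<in> borel_measurable MK"
      by (rule MKs.borel_measurable_lebesgue_integral) (use GLpm in \<open>simp add: case_prod_beta'\<close>)
    show "norm (\<integral>xb. GL xa xb \<partial>MK) \<le> (C ^ L) ^ L" for xa
      by (rule int_bound[OF MKp bGL])
    define uu where "uu z p = fst z p - fst z (fst p, (snd p + 1) mod L) - snd z p + snd z ((fst p + 1) mod L, snd p)"
      for z :: "(nat \<times> nat \<Rightarrow> real) \<times> (nat \<times> nat \<Rightarrow> real)" and p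
    have PLK: "PL N xa xb = (\<Prod>p\<in>K. PS (fc (fst p) (snd p)) N (uu (xa, xb) p))" for N xa xb
      unfolding PL_def uu_def K_def by (simp add: prod_pairs)
    have GLK: "GL xa xb = (\<Prod>p\<in>K. G (fst p) (snd p) (uu (xa, xb) p))" for xa xb
      unfolding GL_def uu_def K_def by (simp add: prod_pairs)
    have UK: "\<forall>\<epsilon>>0. \<exists>N0. \<forall>N\<ge>N0. \<forall>z. norm ((\<Prod>p\<in>K. PS (fc (fst p) (snd p)) N (uu z p)) - (\<Prod>p\<in>K. G (fst p) (snd p) (uu z p))) \<le> \<epsilon>"
    proof (rule unif_prod[OF finK _ _ _ C1])
      fix p assume "p \<in> K"
      then have ij: "fst p < L" "snd p < L" unfolding K_def by auto
      show "\<forall>\<epsilon>>0. \<exists>N0. \<forall>N\<ge>N0. \<forall>z. norm (PS (fc (fst p) (snd p)) N (uu z p) - G (fst p) (snd p) (uu z p)) \<le> \<epsilon>"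
        using U[OF ij] by meson
      show "norm (PS (fc (fst p) (snd p)) N (uu z p)) \<le> C" for N z by (rule bPS[OF ij])
      show "norm (G (fst p) (snd p) (uu z p)) \<le> C" for z by (rule bG[OF ij])
    qed
    show "\<forall>\<epsilon>>0. \<exists>N0. \<forall>N\<ge>N0. \<forall>xa\<in>space MK. norm ((\<integral>xb. PL N xa xb \<partial>MK) - (\<integral>xb. GL xa xb \<partial>MK)) \<le> \<epsilon>"
    proof (intro allI impI)
      fix \<epsilon> :: real assume e: "\<epsilon> > 0"
      then obtain N0 where N0: "\<forall>N\<ge>N0. \<forall>z. norm ((\<Prod>p\<in>K. PS (fc (fst p) (snd p)) N (uu z p)) - (\<Prod>p\<in>K. G (fst p) (snd p) (uu z p))) \<le> \<epsilon>"
        using UK by blast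
      show "\<exists>N0. \<forall>N\<ge>N0. \<forall>xa\<in>space MK. norm ((\<integral>xb. PL N xa xb \<partial>MK) - (\<integral>xb. GL xa xb \<partial>MK)) \<le> \<epsilon>"
      proof (intro exI allI impI ballI)
        fix N xa assume N: "N0 \<le> N"
        show "norm ((\<integral>xb. PL N xa xb \<partial>MK) - (\<integral>xb. GL xa xb \<partial>MK)) \<le> \<epsilon>"
        proof (rule int_close[OF MKp PLm GLm])
          show "norm (PL N xa xb) \<le> (C ^ L) ^ L" for xb by (rule bPL)
          show "norm (GL xa xb) \<le> (C ^ L) ^ L" for xb by (rule bGL)
          show "norm (PL N xa xb - GL xa xb) \<le> \<epsilon>" for xb
            unfolding PLK GLK using N0 N by blast
        qed
      qed
    qed
  qed
  have L4: "(\<integral>xa. (\<integral>xb. PL N xa xb \<partial>MK) \<partial>MK) = W N" for N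
    unfolding PL_def PS_def MK_def K_def W_def by (rule trig_lhs[OF L0])
  have LHS: "W \<longlonglongrightarrow> complex_of_real (\<integral>xa. (\<integral>xb. (\<Prod>i<L. \<Prod>j<L.
              f i j (xa (i, j) - xa (i, (j + 1) mod L) - xb (i, j) + xb ((i + 1) mod L, j)))
            \<partial>unit_cube ({..<L} \<times> {..<L})) \<partial>unit_cube ({..<L} \<times> {..<L}))"
    using L3 unfolding L1 L2 L4 .
  from LIMSEQ_unique[OF LHS RHS] show ?thesis by (simp only: of_real_eq_iff)
qed

end
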